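(* Let $(V,m)$ be a discrete measure space and $(b,c)$ a connected graph over $(V,m)$. If there exists $f\in D(Q^{(N)})$ with $f_\infty\neq0$, then $Q^{(N)}\neq Q^{(D)}$. If, moreover, (FC) holds, i.e. $\widetilde L C_c(V)\subseteq\ell^2(V,m)$, then the restriction of $\widetilde L$ to $C_c(V)$ is not essentially selfadjoint in $\ell^2(V,m)$.
   Context: $V$ is a finite or countably infinite set and $m:V\to(0,\infty)$; $(V,m)$ is a discrete measure space. $C(V)$ is the set of all functions $V\to\mathbb C$, $C_c(V)$ the finitely supported ones, and $\ell^2(V,m)$ carries $\langle u,v\rangle=\sum_x u(x)\overline{v(x)}m(x)$. A graph over $(V,m)$ is a pair $(b,c)$ with $c:V\to[0,\infty)$, $b:V\times V\to[0,\infty)$, $b(x,x)=0$, $b(x,y)=b(y,x)$, $\sum_y b(x,y)<\infty$. A path from $x$ to $y$ is a finite sequence $x=x_1,\dots,x_n=y$ with $b(x_j,x_{j+1})>0$; the graph is connected if any two vertices are joined by a path. Let $\widetilde F=\{u\in C(V):\sum_y|b(x,y)u(y)|<\infty\ \forall x\}$ and $\widetilde L u(x)=\frac{1}{m(x)}\sum_y b(x,y)(u(x)-u(y))+\frac{c(x)}{m(x)}u(x)$ for $u\in\widetilde F$. $Q^{(N)}$ is the form on $\ell^2(V,m)$ with domain $D(Q^{(N)})=\{u\in\ell^2(V,m):\frac12\sum_{x,y}b(x,y)|u(x)-u(y)|^2+\sum_x c(x)|u(x)|^2<\infty\}$ and $Q^{(N)}(u,v)=\frac12\sum_{x,y}b(x,y)(u(x)-u(y))\overline{(v(x)-v(y))}+\sum_x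 c(x)u(x)\overline{v(x)}$. $Q^{(D)}$ is the closure of the restriction of $Q^{(N)}$ to $C_c(V)$. The length of a path $\gamma=(x_1,\dots,x_n)$ is $L(\gamma)=\sum_{j=1}^{n-1}b(x_j,x_{j+1})^{-1/2}$ and $d(x,y)=\inf\{L(\gamma):\gamma\text{ a path from }x\text{ to }y\}$, a metric on $V$. $\widehat V$ is the metric completion of $(V,d)$ and $V_\infty=\widehat V\setminus V$. Every $u\in D(Q^{(N)})$ satisfies $|u(x)-u(y)|\le Q^{(N)}(u,u)^{1/2}d(x,y)$ and extends uniquely to a Lipschitz function $\widehat u$ on $\widehat V$; $u_\infty$ is the restriction of $\widehat u$ to $V_\infty$ (and $u_\infty:=0$ if $V_\infty=\emptyset$). *)

theory Defs
  imports "HOL-Analysis.Analysis"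
begin

text \<open>Vertex set V is the (countable, i.e. finite or countably infinite) type 'v.
  Functions V -> C are of type 'v => complex.\<close>

definition graph_over :: "('v \<Rightarrow> real) \<Rightarrow> ('v \<Rightarrow> 'v \<Rightarrow> real) \<Rightarrow> ('v \<Rightarrow> real) \<Rightarrow> bool" where
  "graph_over m b c \<longleftrightarrow>
     (\<forall>x. m x > 0) \<and> (\<forall>x. c x \<ge> 0) \<and> (\<forall>x y. b x y \<ge> 0) \<and>
     (\<forall>x. b x x = 0) \<and> (\<forall>x y. b x y = b y x) \<and> (\<forall>x. (\<lambda>y. b x y) summable_on UNIV)"

definition is_path :: "('v \<Rightarrow> 'v \<Rightarrow> real) \<Rightarrow> 'v list \<Rightarrow> 'v \<Rightarrow> 'v \<Rightarrow> bool" where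
  "is_path b xs x y \<longleftrightarrow> xs \<noteq> [] \<and> hd xs = x \<and> last xs = y \<and>
     (\<forall>i < length xs - 1. b (xs ! i) (xs ! (i + 1)) > 0)"

definition connected_graph :: "('v \<Rightarrow> 'v \<Rightarrow> real) \<Rightarrow> bool" where
  "connected_graph b \<longleftrightarrow> (\<forall>x y. \<exists>xs. is_path b xs x y)"

definition Cc :: "('v \<Rightarrow> complex) set" where
  "Cc = {u. finite {x. u x \<noteq> 0}}"

definition l2 :: "('v \<Rightarrow> real) \<Rightarrow> ('v \<Rightarrow> complex) set" where
  "l2 m = {u. (\<lambda>x. (cmod (u x))\<^sup>2 * m x) summable_on UNIV}"

definition l2norm :: "('v \<Rightarrow> real) \<Rightarrow> ('v \<Rightarrow> complex) \<Rightarrow> real" where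
  "l2norm m u = sqrt (\<Sum>\<^sub>\<infinity>x. (cmod (u x))\<^sup>2 * m x)"

definition inner_l2 :: "('v \<Rightarrow> real) \<Rightarrow> ('v \<Rightarrow> complex) \<Rightarrow> ('v \<Rightarrow> complex) \<Rightarrow> complex" where
  "inner_l2 m u v = (\<Sum>\<^sub>\<infinity>x. u x * cnj (v x) * complex_of_real (m x))"

definition Ltilde :: "('v \<Rightarrow> real) \<Rightarrow> ('v \<Rightarrow> 'v \<Rightarrow> real) \<Rightarrow> ('v \<Rightarrow> real)
    \<Rightarrow> ('v \<Rightarrow> complex) \<Rightarrow> ('v \<Rightarrow> complex)" where
  "Ltilde m b c u = (\<lambda>x. complex_of_real (1 / m x) *
        (\<Sum>\<^sub>\<infinity>y. complex_of_real (b x y) * (u x - u y))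
      + complex_of_real (c x / m x) * u x)"

definition FC :: "('v \<Rightarrow> real) \<Rightarrow> ('v \<Rightarrow> 'v \<Rightarrow> real) \<Rightarrow> ('v \<Rightarrow> real) \<Rightarrow> bool" where
  "FC m b c \<longleftrightarrow> (\<forall>\<phi>\<in>Cc. Ltilde m b c \<phi> \<in> l2 m)"

text \<open>A (sesquilinear) form on l^2 is represented by its domain together with its values;
  values outside the domain are normalised to 0 so that equality of forms is equality of
  domains and of values on the domain.\<close>

type_synonym 'v form = "('v \<Rightarrow> complex) set \<times> (('v \<Rightarrow> complex) \<Rightarrow> ('v \<Rightarrow> complex) \<Rightarrow> complex)"

definition QN_dom :: "('v \<Rightarrow> real) \<Rightarrow> ('v \<Rightarrow> 'v \<Rightarrow> real) \<Rightarrow> ('v \<Rightarrow> real) \<Rightarrow> ('v \<Rightarrow> complex) set" where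
  "QN_dom m b c = {u \<in> l2 m.
      (\<lambda>(x, y). b x y * (cmod (u x - u y))\<^sup>2) summable_on UNIV \<and>
      (\<lambda>x. c x * (cmod (u x))\<^sup>2) summable_on UNIV}"

definition QN_val :: "('v \<Rightarrow> 'v \<Rightarrow> real) \<Rightarrow> ('v \<Rightarrow> real) \<Rightarrow> ('v \<Rightarrow> complex) \<Rightarrow> ('v \<Rightarrow> complex) \<Rightarrow> complex" where
  "QN_val b c u v =
     (1 / 2) * (\<Sum>\<^sub>\<infinity>(x, y). complex_of_real (b x y) * (u x - u y) * cnj (v x - v y))
     + (\<Sum>\<^sub>\<infinity>x. complex_of_real (c x) * u x * cnj (v x))"

definition QN_form :: "('v \<Rightarrow> real) \<Rightarrow> ('v \<Rightarrow> 'v \<Rightarrow> real) \<Rightarrow> ('v \<Rightarrow> real) \<Rightarrow> 'v form" where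
  "QN_form m b c = (QN_dom m b c,
     \<lambda>u v. if u \<in> QN_dom m b c \<and> v \<in> QN_dom m b c then QN_val b c u v else 0)"

text \<open>phi is an approximating sequence for u in the closure of Q^(N) restricted to C_c:
  phi_n in C_c, phi_n -> u in l^2, and phi_n is Cauchy w.r.t. Q^(N).\<close>
definition approx_seq :: "('v \<Rightarrow> real) \<Rightarrow> ('v \<Rightarrow> 'v \<Rightarrow> real) \<Rightarrow> ('v \<Rightarrow> real)
    \<Rightarrow> (nat \<Rightarrow> 'v \<Rightarrow> complex) \<Rightarrow> ('v \<Rightarrow> complex) \<Rightarrow> bool" where
  "approx_seq m b c \<phi> u \<longleftrightarrow> u \<in> l2 m \<and> (\<forall>n. \<phi> n \<in> Cc) \<and>
     (\<lambda>n. l2norm m (\<phi> n - u)) \<longlonglongrightarrow> 0 \<and>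
     (\<forall>\<epsilon>>0. \<exists>N. \<forall>k\<ge>N. \<forall>l\<ge>N. Re (QN_val b c (\<phi> k - \<phi> l) (\<phi> k - \<phi> l)) < \<epsilon>)"

definition QD_dom :: "('v \<Rightarrow> real) \<Rightarrow> ('v \<Rightarrow> 'v \<Rightarrow> real) \<Rightarrow> ('v \<Rightarrow> real) \<Rightarrow> ('v \<Rightarrow> complex) set" where
  "QD_dom m b c = {u \<in> l2 m. \<exists>\<phi>. approx_seq m b c \<phi> u}"

definition QD_val :: "('v \<Rightarrow> real) \<Rightarrow> ('v \<Rightarrow> 'v \<Rightarrow> real) \<Rightarrow> ('v \<Rightarrow> real)
    \<Rightarrow> ('v \<Rightarrow> complex) \<Rightarrow> ('v \<Rightarrow> complex) \<Rightarrow> complex" where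
  "QD_val m b c u v = (THE z. \<forall>\<phi> \<psi>. approx_seq m b c \<phi> u \<longrightarrow> approx_seq m b c \<psi> v \<longrightarrow>
       (\<lambda>n. QN_val b c (\<phi> n) (\<psi> n)) \<longlonglongrightarrow> z)"

definition QD_form :: "('v \<Rightarrow> real) \<Rightarrow> ('v \<Rightarrow> 'v \<Rightarrow> real) \<Rightarrow> ('v \<Rightarrow> real) \<Rightarrow> 'v form" where
  "QD_form m b c = (QD_dom m b c,
     \<lambda>u v. if u \<in> QD_dom m b c \<and> v \<in> QD_dom m b c then QD_val m b c u v else 0)"

definition path_length :: "('v \<Rightarrow> 'v \<Rightarrow> real) \<Rightarrow> 'v list \<Rightarrow> real" where
  "path_length b xs = (\<Sum>i < length xs - 1. 1 / sqrt (b (xs ! i) (xs ! (i + 1))))"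

definition dist_b :: "('v \<Rightarrow> 'v \<Rightarrow> real) \<Rightarrow> 'v \<Rightarrow> 'v \<Rightarrow> real" where
  "dist_b b x y = Inf {path_length b xs | xs. is_path b xs x y}"

definition d_Cauchy :: "('v \<Rightarrow> 'v \<Rightarrow> real) \<Rightarrow> (nat \<Rightarrow> 'v) \<Rightarrow> bool" where
  "d_Cauchy b xs \<longleftrightarrow> (\<forall>\<epsilon>>0. \<exists>N. \<forall>k\<ge>N. \<forall>l\<ge>N. dist_b b (xs k) (xs l) < \<epsilon>)"

text \<open>Points of V_infinity = completion minus V are represented by d-Cauchy sequences in V
  that do not converge to a point of V.\<close>
definition boundary_seq :: "('v \<Rightarrow> 'v \<Rightarrow> real) \<Rightarrow> (nat \<Rightarrow> 'v) \<Rightarrow> bool" where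
  "boundary_seq b xs \<longleftrightarrow> d_Cauchy b xs \<and> \<not> (\<exists>x. (\<lambda>n. dist_b b (xs n) x) \<longlonglongrightarrow> 0)"

text \<open>u_infinity: the value of the Lipschitz extension at the boundary point represented
  by xs is the limit of u along xs; 0 on non-boundary sequences (so u_infinity = 0 when
  V_infinity is empty).\<close>
definition u_infty :: "('v \<Rightarrow> 'v \<Rightarrow> real) \<Rightarrow> ('v \<Rightarrow> complex) \<Rightarrow> (nat \<Rightarrow> 'v) \<Rightarrow> complex" where
  "u_infty b u = (\<lambda>xs. if boundary_seq b xs then lim (\<lambda>n. u (xs n)) else 0)"

definition Cc_graph :: "('v \<Rightarrow> real) \<Rightarrow> ('v \<Rightarrow> 'v \<Rightarrow> real) \<Rightarrow> ('v \<Rightarrow> real)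
    \<Rightarrow> (('v \<Rightarrow> complex) \<times> ('v \<Rightarrow> complex)) set" where
  "Cc_graph m b c = {(\<phi>, Ltilde m b c \<phi>) | \<phi>. \<phi> \<in> Cc}"

definition graph_closure :: "('v \<Rightarrow> real) \<Rightarrow> (('v \<Rightarrow> complex) \<times> ('v \<Rightarrow> complex)) set
    \<Rightarrow> (('v \<Rightarrow> complex) \<times> ('v \<Rightarrow> complex)) set" where
  "graph_closure m G = {(u, v). u \<in> l2 m \<and> v \<in> l2 m \<and>
     (\<exists>s. (\<forall>n. s n \<in> G) \<and> (\<lambda>n. l2norm m (fst (s n) - u)) \<longlonglongrightarrow> 0 \<and>
          (\<lambda>n. l2norm m (snd (s n) - v)) \<longlonglongrightarrow> 0)}"

definition graph_adjoint :: "('v \<Rightarrow> real) \<Rightarrow> (('v \<Rightarrow> complex) \<times> ('v \<Rightarrow> complex)) set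
    \<Rightarrow> (('v \<Rightarrow> complex) \<times> ('v \<Rightarrow> complex)) set" where
  "graph_adjoint m G = {(v, w). v \<in> l2 m \<and> w \<in> l2 m \<and>
     (\<forall>(u, z)\<in>G. inner_l2 m z v = inner_l2 m u w)}"

definition is_operator_graph :: "('a \<times> 'b) set \<Rightarrow> bool" where
  "is_operator_graph G \<longleftrightarrow> (\<forall>u v w. (u, v) \<in> G \<longrightarrow> (u, w) \<in> G \<longrightarrow> v = w)"

definition essentially_selfadjoint :: "('v \<Rightarrow> real) \<Rightarrow> (('v \<Rightarrow> complex) \<times> ('v \<Rightarrow> complex)) set \<Rightarrow> bool" where
  "essentially_selfadjoint m G \<longleftrightarrow>
     is_operator_graph (graph_closure m G) \<and>
     graph_closure m G = graph_adjoint m (graph_closure m G)"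

end

theory Submission
  imports Defs
begin


lemma infsum_of_real_c:
  "infsum (\<lambda>x. complex_of_real (f x)) A = complex_of_real (infsum f A)"
proof (cases "f summable_on A")
  case True
  then show ?thesis by (intro infsumI has_sum_of_real) simp
next
  case False
  have "\<not> (\<lambda>x. complex_of_real (f x)) summable_on A"
  proof
    assume "(\<lambda>x. complex_of_real (f x)) summable_on A"
    from summable_on_Re[OF this] False show False by simp
  qed
  with False show ?thesis by (simp add: infsum_not_exists)
qed

lemma single_le_infsum:
  fixes f :: "'a \<Rightarrow> real"
  assumes "f summable_on UNIV" "\<And>x. f x \<ge> 0"
  shows "f a \<le> infsum f UNIV"
  using finite_sum_le_infsum[OF assms(1), of "{a}"] assms(2) by simp

lemma fatou_infsum:
  fixes h :: "nat \<Rightarrow> 'a \<Rightarrow> real"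
  assumes nn: "\<And>k x. h k x \<ge> 0"
    and lim: "\<And>x. (\<lambda>k. h k x) \<longlonglongrightarrow> H x"
    and bd: "\<And>k. k \<ge> N \<Longrightarrow> h k summable_on UNIV \<and> infsum (h k) UNIV \<le> C"
  shows "H summable_on UNIV \<and> infsum H UNIV \<le> C"
proof -
  have Hnn: "H x \<ge> 0" for x
    by (rule LIMSEQ_le_const[OF lim]) (use nn in auto)
  have fin: "sum H F \<le> C" if "finite F" for F
  proof -
    have "(\<lambda>k. sum (h k) F) \<longlonglongrightarrow> sum H F"
      by (rule tendsto_sum) (use lim in auto)
    moreover have "\<forall>k\<ge>N. sum (h k) F \<le> C"
    proof (intro allI impI)
      fix k assume "k \<ge> N"
      with bd have s: "h k summable_on UNIV" and le: "infsum (h k) UNIV \<le> C" by auto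
      have "sum (h k) F \<le> infsum (h k) UNIV"
        by (rule finite_sum_le_infsum[OF s that]) (use nn in auto)
      with le show "sum (h k) F \<le> C" by linarith
    qed
    ultimately show ?thesis by (intro LIMSEQ_le_const2) auto
  qed
  have s: "H summable_on UNIV"
    by (rule nonneg_bdd_above_summable_on) (use Hnn fin in \<open>auto intro!: bdd_aboveI2\<close>)
  moreover have "infsum H UNIV \<le> C"
    by (rule infsum_le_finite_sums[OF s]) (use fin in auto)
  ultimately show ?thesis by simp
qed

lemma sq_sum_le: "(p + q)\<^sup>2 \<le> 2 * p\<^sup>2 + 2 * (q::real)\<^sup>2"
proof -
  have "0 \<le> (p - q)\<^sup>2" by simp
  thus ?thesis by (simp add: power2_eq_square algebra_simps)
qed

lemma cmod_diff_sq_le: "(cmod (a - c))\<^sup>2 \<le> 2 * (cmod a)\<^sup>2 + 2 * (cmod c)\<^sup>2"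
proof -
  have "cmod (a - c) \<le> cmod a + cmod c" by (rule norm_triangle_ineq4)
  hence "(cmod (a - c))\<^sup>2 \<le> (cmod a + cmod c)\<^sup>2" by (simp add: power_mono)
  also have "\<dots> \<le> 2 * (cmod a)\<^sup>2 + 2 * (cmod c)\<^sup>2" by (rule sq_sum_le)
  finally show ?thesis .
qed

lemma graph_overD:
  assumes "graph_over m b c"
  shows "\<And>x. m x > 0" "\<And>x. c x \<ge> 0" "\<And>x y. b x y \<ge> 0" "\<And>x. b x x = 0"
    "\<And>x y. b x y = b y x" "\<And>x. (\<lambda>y. b x y) summable_on UNIV"
  using assms unfolding graph_over_def by auto

lemma Cc_finite: "v \<in> Cc \<Longrightarrow> finite {x. v x \<noteq> 0}"
  by (simp add: Cc_def)

lemma pair_summable_Cc: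
  assumes g: "graph_over m b c" and v: "v \<in> Cc"
  shows "(\<lambda>(x,y). b x y * (cmod (v x - v y))\<^sup>2) summable_on UNIV"
proof -
  note G = graph_overD[OF g]
  define T1 where "T1 = (\<lambda>(x,y). b x y * (cmod (v x))\<^sup>2)"
  have fin: "finite {x. v x \<noteq> 0}" using Cc_finite[OF v] .
  have s1: "T1 summable_on Sigma UNIV (\<lambda>_. UNIV)"
  proof (rule summable_on_SigmaI[where g = "\<lambda>x. infsum (b x) UNIV * (cmod (v x))\<^sup>2"])
    fix x :: 'a
    have "((\<lambda>y. b x y) has_sum infsum (b x) UNIV) UNIV"
      using G(6)[of x] by (simp add: has_sum_infsum)
    from has_sum_cmult_right[OF this, of "(cmod (v x))\<^sup>2"]
    show "((\<lambda>y. T1 (x, y)) has_sum infsum (b x) UNIV * (cmod (v x))\<^sup>2) UNIV"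
      by (simp add: T1_def mult.commute)
  next
    show "(\<lambda>x. infsum (b x) UNIV * (cmod (v x))\<^sup>2) summable_on UNIV"
      by (rule finite_nonzero_values_imp_summable_on) (rule finite_subset[OF _ fin], auto)
  next
    fix x y show "0 \<le> T1 (x, y)" using G(3) by (simp add: T1_def)
  qed
  hence s1': "T1 summable_on UNIV" by simp
  have s2: "(\<lambda>(x,y). T1 (y,x)) summable_on UNIV"
    using s1' summable_on_swap[of T1 UNIV UNIV] by simp
  have s: "(\<lambda>p. 2 * T1 p + 2 * (\<lambda>(x,y). T1 (y,x)) p) summable_on UNIV"
    by (intro summable_on_add summable_on_cmult_right s1' s2)
  show ?thesis
  proof (rule summable_on_comparison_test[OF s])
    fix p :: "'a \<times> 'a"
    obtain x y where p: "p = (x,y)" by force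
    have "b x y * (cmod (v x - v y))\<^sup>2 \<le> b x y * (2 * (cmod (v x))\<^sup>2 + 2 * (cmod (v y))\<^sup>2)"
      by (rule mult_left_mono[OF cmod_diff_sq_le G(3)])
    thus "(case p of (x, y) \<Rightarrow> b x y * (cmod (v x - v y))\<^sup>2) \<le> 2 * T1 p + 2 * (case p of (x, y) \<Rightarrow> T1 (y, x))"
      using G(5)[of x y] by (simp add: p T1_def algebra_simps)
    show "0 \<le> (case p of (x, y) \<Rightarrow> b x y * (cmod (v x - v y))\<^sup>2)"
      using G(3) by (simp add: p)
  qed
qed

lemma path_length_Cons2:
  "path_length b (a # c # rest) = 1 / sqrt (b a c) + path_length b (c # rest)"
  unfolding path_length_def by (simp del: sum.lessThan_Suc add: sum.lessThan_Suc_shift)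

lemma path_bound:
  fixes u :: "'v \<Rightarrow> complex"
  assumes E: "\<And>x y. b x y > 0 \<Longrightarrow> cmod (u x - u y) \<le> K / sqrt (b x y)"
  shows "xs \<noteq> [] \<Longrightarrow> (\<forall>i<length xs - 1. b (xs!i) (xs!(i+1)) > 0) \<Longrightarrow>
     cmod (u (hd xs) - u (last xs)) \<le> K * path_length b xs"
proof (induction xs)
  case Nil thus ?case by simp
next
  case (Cons a xs)
  show ?case
  proof (cases xs)
    case Nil thus ?thesis by (simp add: path_length_def)
  next
    case (Cons c rest)
    have e: "b a c > 0" using Cons.prems(2) \<open>xs = c # rest\<close> by (auto elim: allE[of _ 0])
    have p: "\<forall>i<length xs - 1. b (xs!i) (xs!(i+1)) > 0"
    proof (intro allI impI)
      fix i assume "i < length xs - 1"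
      with Cons.prems(2)[rule_format, of "Suc i"] show "b (xs!i) (xs!(i+1)) > 0"
        using \<open>xs = c # rest\<close> by simp
    qed
    have ih: "cmod (u (hd xs) - u (last xs)) \<le> K * path_length b xs"
      using Cons.IH p \<open>xs = c # rest\<close> by simp
    have "cmod (u a - u (last xs)) \<le> cmod (u a - u c) + cmod (u c - u (last xs))"
      using norm_triangle_ineq[of "u a - u c" "u c - u (last xs)"] by simp
    also have "\<dots> \<le> K / sqrt (b a c) + K * path_length b xs"
      using E[OF e] ih \<open>xs = c # rest\<close> by simp
    also have "\<dots> = K * path_length b (a # xs)"
      using \<open>xs = c # rest\<close> by (simp add: path_length_Cons2 algebra_simps)
    finally show ?thesis using \<open>xs = c # rest\<close> by simp
  qed
qed

lemma path_length_nonneg: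
  assumes "is_path b xs x y" shows "path_length b xs \<ge> 0"
  using assms unfolding path_length_def is_path_def
  by (intro sum_nonneg) (auto intro: less_imp_le)

lemma dist_b_nonneg:
  assumes "connected_graph b" shows "dist_b b x y \<ge> 0"
proof -
  obtain xs where "is_path b xs x y" using assms unfolding connected_graph_def by blast
  thus ?thesis unfolding dist_b_def
    by (intro cInf_greatest) (auto intro: path_length_nonneg)
qed

lemma dist_bound:
  fixes u :: "'v \<Rightarrow> complex"
  assumes conn: "connected_graph b" and K: "K \<ge> 0"
    and E: "\<And>x y. b x y > 0 \<Longrightarrow> cmod (u x - u y) \<le> K / sqrt (b x y)"
  shows "cmod (u x - u y) \<le> K * dist_b b x y"
proof -
  define P where "P = {path_length b xs | xs. is_path b xs x y}"
  have pb: "cmod (u x - u y) \<le> K * p" if "p \<in> P" for p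
  proof -
    from that obtain xs where xs: "is_path b xs x y" "p = path_length b xs" by (auto simp: P_def)
    show ?thesis using path_bound[where xs=xs, OF E] xs unfolding is_path_def by auto
  qed
  obtain xs0 where xs0: "is_path b xs0 x y" using conn unfolding connected_graph_def by blast
  hence ne: "P \<noteq> {}" by (auto simp: P_def)
  show ?thesis
  proof (cases "K = 0")
    case True
    with pb[of "path_length b xs0"] xs0 show ?thesis by (auto simp: P_def)
  next
    case False
    hence Kp: "K > 0" using K by simp
    have "cmod (u x - u y) / K \<le> Inf P"
      by (rule cInf_greatest[OF ne]) (use pb Kp in \<open>auto simp: field_simps\<close>)
    thus ?thesis using Kp unfolding dist_b_def P_def[symmetric] by (simp add: field_simps)
  qed
qed

lemma edge_bound:
  fixes u :: "'v \<Rightarrow> complex"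
  assumes s: "(\<lambda>(x,y). b x y * (cmod (u x - u y))\<^sup>2) summable_on UNIV"
    and nn: "\<And>x y. b x y \<ge> 0" and bp: "b x y > 0"
  shows "cmod (u x - u y) \<le> sqrt (infsum (\<lambda>(x,y). b x y * (cmod (u x - u y))\<^sup>2) UNIV) / sqrt (b x y)"
proof -
  define D where "D = infsum (\<lambda>(x,y). b x y * (cmod (u x - u y))\<^sup>2) UNIV"
  have "b x y * (cmod (u x - u y))\<^sup>2 \<le> D"
    using single_le_infsum[OF s, of "(x,y)"] nn unfolding D_def by (auto intro: mult_nonneg_nonneg)
  hence "(cmod (u x - u y))\<^sup>2 \<le> D / b x y" using bp by (simp add: field_simps)
  hence "sqrt ((cmod (u x - u y))\<^sup>2) \<le> sqrt (D / b x y)" by (rule real_sqrt_le_mono)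
  thus ?thesis unfolding D_def by (simp add: real_sqrt_divide)
qed

lemma Cc_diff: "v \<in> Cc \<Longrightarrow> w \<in> Cc \<Longrightarrow> v - w \<in> Cc"
  unfolding Cc_def by (auto intro: finite_subset[of _ "{x. v x \<noteq> 0} \<union> {x. w x \<noteq> 0}"])

lemma l2_diff:
  assumes m: "\<And>x. m x \<ge> 0" and a: "a \<in> l2 m" and c: "c \<in> l2 m"
  shows "a - c \<in> l2 m"
proof -
  have s: "(\<lambda>x. 2 * ((cmod (a x))\<^sup>2 * m x) + 2 * ((cmod (c x))\<^sup>2 * m x)) summable_on UNIV"
    using a c unfolding l2_def by (intro summable_on_add summable_on_cmult_right) auto
  show ?thesis unfolding l2_def mem_Collect_eq
  proof (rule summable_on_comparison_test[OF s])
    fix x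
    have "(cmod (a x - c x))\<^sup>2 * m x \<le> (2 * (cmod (a x))\<^sup>2 + 2 * (cmod (c x))\<^sup>2) * m x"
      by (rule mult_right_mono[OF cmod_diff_sq_le m])
    thus "(cmod ((a - c) x))\<^sup>2 * m x \<le> 2 * ((cmod (a x))\<^sup>2 * m x) + 2 * ((cmod (c x))\<^sup>2 * m x)"
      by (simp add: algebra_simps)
    show "0 \<le> (cmod ((a - c) x))\<^sup>2 * m x" using m by simp
  qed
qed

lemma l2_pointwise:
  assumes mp: "m x > 0" and mnn: "\<And>x. m x \<ge> 0" and w: "w \<in> l2 m"
  shows "cmod (w x) \<le> l2norm m w / sqrt (m x)"
proof -
  define S where "S = (\<Sum>\<^sub>\<infinity>x. (cmod (w x))\<^sup>2 * m x)"
  have "(cmod (w x))\<^sup>2 * m x \<le> S"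
    unfolding S_def by (rule single_le_infsum) (use w mnn in \<open>auto simp: l2_def\<close>)
  hence "(cmod (w x))\<^sup>2 \<le> S / m x" using mp by (simp add: field_simps)
  hence "sqrt ((cmod (w x))\<^sup>2) \<le> sqrt (S / m x)" by (rule real_sqrt_le_mono)
  thus ?thesis unfolding l2norm_def S_def[symmetric] by (simp add: real_sqrt_divide)
qed

lemma ofr_sq: "complex_of_real (r * (cmod z)\<^sup>2) = complex_of_real r * z * cnj z"
  by (simp only: of_real_mult complex_norm_square mult.assoc)

lemma ReQN_ge:
  assumes "\<And>x. c x \<ge> 0"
  shows "Re (QN_val b c v v) \<ge> (1/2) * infsum (\<lambda>(x,y). b x y * (cmod (v x - v y))\<^sup>2) UNIV"
proof -
  have e1: "(\<lambda>(x, y). complex_of_real (b x y) * (v x - v y) * cnj (v x - v y)) =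
        (\<lambda>p. complex_of_real ((\<lambda>(x,y). b x y * (cmod (v x - v y))\<^sup>2) p))"
    by (rule ext) (auto simp only: ofr_sq split: prod.splits)
  have e2: "(\<lambda>x. complex_of_real (c x) * v x * cnj (v x)) =
        (\<lambda>x. complex_of_real (c x * (cmod (v x))\<^sup>2))"
    by (rule ext) (simp only: ofr_sq)
  have nn: "infsum (\<lambda>x. c x * (cmod (v x))\<^sup>2) UNIV \<ge> 0"
    by (rule infsum_nonneg) (use assms in auto)
  show ?thesis unfolding QN_val_def e1 e2 infsum_of_real_c using nn by simp
qed

lemma boundary_leaves:
  assumes conn: "connected_graph b" and bs: "boundary_seq b xs" and fin: "finite S"
  shows "eventually (\<lambda>n. xs n \<notin> S) sequentially"
proof -
  have "\<forall>a\<in>S. eventually (\<lambda>n. xs n \<noteq> a) sequentially"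
  proof
    fix a assume "a \<in> S"
    show "eventually (\<lambda>n. xs n \<noteq> a) sequentially"
    proof (rule ccontr)
      assume ne: "\<not> eventually (\<lambda>n. xs n \<noteq> a) sequentially"
      have fr: "\<forall>N. \<exists>l\<ge>N. xs l = a"
        using ne unfolding eventually_sequentially by auto
      have "(\<lambda>n. dist_b b (xs n) a) \<longlonglongrightarrow> 0"
      proof (rule LIMSEQ_I)
        fix r :: real assume r: "r > 0"
        obtain N where N: "\<forall>k\<ge>N. \<forall>l\<ge>N. dist_b b (xs k) (xs l) < r"
          using bs r unfolding boundary_seq_def d_Cauchy_def by blast
        obtain l where l: "l \<ge> N" "xs l = a" using fr by blast
        show "\<exists>no. \<forall>n\<ge>no. norm (dist_b b (xs n) a - 0) < r"
          using N l dist_b_nonneg[OF conn] by (metis abs_of_nonneg real_norm_def diff_zero)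
      qed
      thus False using bs unfolding boundary_seq_def by blast
    qed
  qed
  hence "eventually (\<lambda>n. \<forall>a\<in>S. xs n \<noteq> a) sequentially"
    by (rule eventually_ball_finite[OF fin])
  thus ?thesis by (rule eventually_mono) auto
qed

lemma QD_tendsto0:
  assumes g: "graph_over m b c" and conn: "connected_graph b"
    and u: "u \<in> QD_dom m b c" and bs: "boundary_seq b xs"
  shows "(\<lambda>n. u (xs n)) \<longlonglongrightarrow> 0"
proof -
  note G = graph_overD[OF g]
  obtain \<phi> where ap: "approx_seq m b c \<phi> u" using u unfolding QD_dom_def by blast
  have uL: "u \<in> l2 m" and Cc: "\<And>n. \<phi> n \<in> Cc"
    and conv: "(\<lambda>n. l2norm m (\<phi> n - u)) \<longlonglongrightarrow> 0"
    and cau: "\<And>\<epsilon>. \<epsilon> > 0 \<Longrightarrow> \<exists>N. \<forall>k\<ge>N. \<forall>l\<ge>N. Re (QN_val b c (\<phi> k - \<phi> l) (\<phi> k - \<phi> l)) < \<epsilon>"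
    using ap unfolding approx_seq_def by auto
  have mnn: "\<And>x. m x \<ge> 0" using G(1) less_imp_le by blast
  have l2C: "v \<in> l2 m" if "v \<in> Cc" for v
    using Cc_finite[OF that] unfolding l2_def mem_Collect_eq
    by (intro finite_nonzero_values_imp_summable_on) (auto intro: finite_subset)
  have pw: "(\<lambda>n. \<phi> n x) \<longlonglongrightarrow> u x" for x
  proof -
    have "(\<lambda>n. \<phi> n x - u x) \<longlonglongrightarrow> 0"
    proof (rule Lim_null_comparison)
      show "\<forall>\<^sub>F n in sequentially. norm (\<phi> n x - u x) \<le> l2norm m (\<phi> n - u) / sqrt (m x)"
        using l2_pointwise[OF G(1) mnn l2_diff[OF mnn l2C[OF Cc] uL]] by simp
      show "(\<lambda>n. l2norm m (\<phi> n - u) / sqrt (m x)) \<longlonglongrightarrow> 0"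
        using tendsto_divide_zero[OF conv] by simp
    qed
    from tendsto_add[OF this tendsto_const[of "u x"]] show ?thesis by simp
  qed
  show ?thesis
  proof (rule LIMSEQ_I)
    fix \<eta> :: real assume \<eta>: "\<eta> > 0"
    obtain N1 where N1: "\<forall>k\<ge>N1. \<forall>l\<ge>N1. dist_b b (xs k) (xs l) < 1"
      using bs unfolding boundary_seq_def d_Cauchy_def by (meson zero_less_one)
    define \<epsilon> where "\<epsilon> = (\<eta>/3)\<^sup>2 / 2"
    have \<epsilon>: "\<epsilon> > 0" using \<eta> by (simp add: \<epsilon>_def)
    obtain K where K: "\<forall>k\<ge>K. \<forall>l\<ge>K. Re (QN_val b c (\<phi> k - \<phi> l) (\<phi> k - \<phi> l)) < \<epsilon>"
      using cau[OF \<epsilon>] by blast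
    define z where "z = xs N1"
    have e3: "\<eta>/3 > 0" using \<eta> by simp
    have "eventually (\<lambda>k. cmod (\<phi> k z - u z) < \<eta>/3) sequentially"
      using tendsto_iff[THEN iffD1, rule_format, OF pw e3] by (simp add: dist_norm)
    moreover have "eventually (\<lambda>k. k \<ge> K) sequentially" by (rule eventually_ge_at_top)
    ultimately obtain k where k: "k \<ge> K" "cmod (\<phi> k z - u z) < \<eta>/3"
      by (metis (mono_tags, lifting) eventually_sequentially order_refl eventually_conj_iff)
    have lip: "cmod ((\<phi> k (xs n) - \<phi> l (xs n)) - (\<phi> k z - \<phi> l z)) \<le> \<eta>/3"
      if l: "l \<ge> K" and n: "n \<ge> N1" for l n
    proof -
      define v where "v = \<phi> k - \<phi> l"
      have vC: "v \<in> Cc" unfolding v_def by (intro Cc_diff Cc)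
      define D where "D = infsum (\<lambda>(x,y). b x y * (cmod (v x - v y))\<^sup>2) UNIV"
      have "D \<le> 2 * Re (QN_val b c v v)" using ReQN_ge[of c b v] G(2) unfolding D_def by simp
      also have "\<dots> < 2 * \<epsilon>" using K k l unfolding v_def by auto
      finally have "D \<le> (\<eta>/3)\<^sup>2" unfolding \<epsilon>_def by simp
      hence sD: "sqrt D \<le> \<eta>/3" using \<eta> by (metis real_sqrt_abs real_sqrt_le_mono abs_of_pos divide_pos_pos zero_less_numeral)
      have "cmod (v (xs n) - v z) \<le> sqrt D * dist_b b (xs n) z"
      proof (rule dist_bound[OF conn])
        show "0 \<le> sqrt D" unfolding D_def
          by (intro real_sqrt_ge_zero infsum_nonneg) (auto intro: mult_nonneg_nonneg G(3))
      qed (auto simp: D_def intro!: edge_bound pair_summable_Cc[OF g vC] G(3))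
      also have "\<dots> \<le> (\<eta>/3) * 1"
        using N1 n dist_b_nonneg[OF conn] sD \<eta> unfolding z_def
        by (intro mult_mono) (auto intro: less_imp_le)
      finally show ?thesis unfolding v_def by simp
    qed
    have lim: "cmod ((\<phi> k (xs n) - u (xs n)) - (\<phi> k z - u z)) \<le> \<eta>/3" if n: "n \<ge> N1" for n
    proof -
      have "(\<lambda>l. cmod ((\<phi> k (xs n) - \<phi> l (xs n)) - (\<phi> k z - \<phi> l z))) \<longlonglongrightarrow>
            cmod ((\<phi> k (xs n) - u (xs n)) - (\<phi> k z - u z))"
        by (intro tendsto_intros pw)
      thus ?thesis by (rule LIMSEQ_le_const2) (use lip n in auto)
    qed
    have "eventually (\<lambda>n. xs n \<notin> {x. \<phi> k x \<noteq> 0}) sequentially"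
      by (rule boundary_leaves[OF conn bs Cc_finite[OF Cc]])
    moreover have "eventually (\<lambda>n. n \<ge> N1) sequentially" by (rule eventually_ge_at_top)
    ultimately have "eventually (\<lambda>n. norm (u (xs n) - 0) < \<eta>) sequentially"
    proof eventually_elim
      case (elim n)
      hence "cmod ((- u (xs n)) - (\<phi> k z - u z)) \<le> \<eta>/3" using lim[of n] by simp
      moreover have "cmod (u (xs n)) \<le> cmod ((- u (xs n)) - (\<phi> k z - u z)) + cmod (\<phi> k z - u z)"
        using norm_triangle_ineq[of "(- u (xs n)) - (\<phi> k z - u z)" "\<phi> k z - u z"] by simp
      ultimately have "cmod (u (xs n)) \<le> \<eta>/3 + cmod (\<phi> k z - u z)" by linarith
      thus ?case using k \<eta> by simp
    qed
    thus "\<exists>no. \<forall>n\<ge>no. norm (u (xs n) - 0) < \<eta>" by (simp add: eventually_sequentially)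
  qed
qed

lemma QD_u_infty:
  assumes g: "graph_over m b c" and conn: "connected_graph b" and u: "u \<in> QD_dom m b c"
  shows "u_infty b u = (\<lambda>_. 0)"
proof
  fix xs show "u_infty b u xs = 0"
    using QD_tendsto0[OF g conn u] unfolding u_infty_def by (auto intro: limI)
qed

lemma part1:
  assumes g: "graph_over m b c" and conn: "connected_graph b"
    and f: "f \<in> QN_dom m b c" "u_infty b f \<noteq> (\<lambda>_. 0)"
  shows "f \<notin> QD_dom m b c" "QN_form m b c \<noteq> QD_form m b c"
proof -
  show nf: "f \<notin> QD_dom m b c" using QD_u_infty[OF g conn] f(2) by blast
  show "QN_form m b c \<noteq> QD_form m b c"
  proof
    assume "QN_form m b c = QD_form m b c"
    hence "QN_dom m b c = QD_dom m b c" unfolding QN_form_def QD_form_def by simp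
    with f(1) nf show False by simp
  qed
qed



definition nrm :: "('i \<Rightarrow> complex) \<Rightarrow> real" where "nrm w = (\<Sum>\<^sub>\<infinity>i. (cmod (w i))\<^sup>2)"
definition L2 :: "('i \<Rightarrow> complex) set" where "L2 = {w. (\<lambda>i. (cmod (w i))\<^sup>2) summable_on UNIV}"
definition ip :: "('i \<Rightarrow> complex) \<Rightarrow> ('i \<Rightarrow> complex) \<Rightarrow> complex" where
  "ip w h = (\<Sum>\<^sub>\<infinity>i. w i * cnj (h i))"

lemma has_sum_diff:
  fixes f g :: "'a \<Rightarrow> 'b::topological_ab_group_add"
  assumes "(f has_sum a) A" "(g has_sum b) A"
  shows "((\<lambda>x. f x - g x) has_sum (a - b)) A"
proof -
  have "((\<lambda>x. - g x) has_sum - b) A" by (simp add: has_sum_uminus assms(2))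
  from has_sum_add[OF assms(1) this] show ?thesis by simp
qed

lemma has_sum_sum_fun:
  fixes f :: "'s \<Rightarrow> 'a \<Rightarrow> 'b::topological_comm_monoid_add"
  assumes "finite S" "\<And>x. x \<in> S \<Longrightarrow> (f x has_sum s x) A"
  shows "((\<lambda>i. \<Sum>x\<in>S. f x i) has_sum (\<Sum>x\<in>S. s x)) A"
  using assms
proof (induction S rule: finite_induct)
  case empty thus ?case by simp
next
  case (insert y S)
  have "((\<lambda>i. f y i + (\<Sum>x\<in>S. f x i)) has_sum (s y + (\<Sum>x\<in>S. s x))) A"
    using insert by (intro has_sum_add) auto
  thus ?case using insert by simp
qed

lemma cmod_add_sq_le: "(cmod (a + c))\<^sup>2 \<le> 2 * (cmod a)\<^sup>2 + 2 * (cmod c)\<^sup>2"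
  using cmod_diff_sq_le[of a "-c"] by simp

lemma L2_add: "w \<in> L2 \<Longrightarrow> h \<in> L2 \<Longrightarrow> (\<lambda>i. w i + h i) \<in> L2"
  unfolding L2_def mem_Collect_eq
  by (rule summable_on_comparison_test[where f="\<lambda>i. 2 * (cmod (w i))\<^sup>2 + 2 * (cmod (h i))\<^sup>2"])
     (auto intro!: summable_on_add summable_on_cmult_right cmod_add_sq_le)

lemma L2_cmult: "w \<in> L2 \<Longrightarrow> (\<lambda>i. a * w i) \<in> L2"
  unfolding L2_def mem_Collect_eq
  by (simp add: norm_mult power_mult_distrib summable_on_cmult_right)

lemma L2_uminus: "w \<in> L2 \<Longrightarrow> (\<lambda>i. - w i) \<in> L2"
  unfolding L2_def by simp

lemma L2_diff: "w \<in> L2 \<Longrightarrow> h \<in> L2 \<Longrightarrow> (\<lambda>i. w i - h i) \<in> L2"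
  using L2_add[OF _ L2_uminus[of h], of w] by simp

lemma L2_zero: "(\<lambda>i. 0) \<in> L2" unfolding L2_def by simp

lemma nrm_nonneg: "nrm w \<ge> 0" unfolding nrm_def by (rule infsum_nonneg) simp

lemma nrm_single: "w \<in> L2 \<Longrightarrow> (cmod (w i))\<^sup>2 \<le> nrm w"
  unfolding nrm_def L2_def by (rule single_le_infsum) auto

lemma nrm_zeroD: "w \<in> L2 \<Longrightarrow> nrm w = 0 \<Longrightarrow> w i = 0"
  using nrm_single[of w i] by simp

lemma nrm_zero[simp]: "nrm (\<lambda>i. 0) = 0" unfolding nrm_def by simp

lemma ip_summable:
  assumes "w \<in> L2" "h \<in> L2"
  shows "(\<lambda>i. w i * cnj (h i)) summable_on UNIV"
proof -
  have s: "(\<lambda>i. (cmod (w i))\<^sup>2 + (cmod (h i))\<^sup>2) summable_on UNIV"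
    using assms unfolding L2_def by (intro summable_on_add) auto
  have "(\<lambda>i. norm (w i * cnj (h i))) summable_on UNIV"
  proof (rule summable_on_comparison_test[OF s])
    fix i
    have "cmod (w i) * cmod (h i) \<le> ((cmod (w i))\<^sup>2 + (cmod (h i))\<^sup>2) / 2"
      using sum_squares_bound[of "cmod (w i)" "cmod (h i)"] by (simp add: power2_eq_square)
    also have "\<dots> \<le> (cmod (w i))\<^sup>2 + (cmod (h i))\<^sup>2" by simp
    finally show "norm (w i * cnj (h i)) \<le> (cmod (w i))\<^sup>2 + (cmod (h i))\<^sup>2"
      by (simp add: norm_mult)
  qed simp
  thus ?thesis using summable_on_iff_abs_summable_on_complex by blast
qed

lemma cmod_add_sq: "(cmod (a + c))\<^sup>2 = (cmod a)\<^sup>2 + (cmod c)\<^sup>2 + 2 * Re (a * cnj c)"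
  by (simp only: cmod_power2) (simp add: power2_eq_square algebra_simps)

lemma nrm_add:
  assumes "w \<in> L2" "h \<in> L2"
  shows "nrm (\<lambda>i. w i + h i) = nrm w + nrm h + 2 * Re (ip w h)"
proof -
  have sw: "(\<lambda>i. (cmod (w i))\<^sup>2) summable_on UNIV" and sh: "(\<lambda>i. (cmod (h i))\<^sup>2) summable_on UNIV"
    using assms unfolding L2_def by auto
  have sr: "(\<lambda>i. 2 * Re (w i * cnj (h i))) summable_on UNIV"
    by (intro summable_on_cmult_right summable_on_Re ip_summable assms)
  have "nrm (\<lambda>i. w i + h i) = (\<Sum>\<^sub>\<infinity>i. ((cmod (w i))\<^sup>2 + (cmod (h i))\<^sup>2) + 2 * Re (w i * cnj (h i)))"
    unfolding nrm_def cmod_add_sq by simp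
  also have "\<dots> = (\<Sum>\<^sub>\<infinity>i. (cmod (w i))\<^sup>2 + (cmod (h i))\<^sup>2) + (\<Sum>\<^sub>\<infinity>i. 2 * Re (w i * cnj (h i)))"
    by (rule infsum_add[OF summable_on_add[OF sw sh] sr])
  also have "\<dots> = nrm w + nrm h + (\<Sum>\<^sub>\<infinity>i. 2 * Re (w i * cnj (h i)))"
    by (simp only: infsum_add[OF sw sh] nrm_def)
  also have "(\<Sum>\<^sub>\<infinity>i. 2 * Re (w i * cnj (h i))) = 2 * (\<Sum>\<^sub>\<infinity>i. Re (w i * cnj (h i)))"
    by (rule infsum_cmult_right) (intro summable_on_Re ip_summable assms)
  also have "(\<Sum>\<^sub>\<infinity>i. Re (w i * cnj (h i))) = Re (ip w h)"
    unfolding ip_def by (rule infsum_Re[OF ip_summable[OF assms]])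
  finally show ?thesis .
qed

lemma nrm_cmult: "w \<in> L2 \<Longrightarrow> nrm (\<lambda>i. a * w i) = (cmod a)\<^sup>2 * nrm w"
  unfolding nrm_def L2_def by (simp add: norm_mult power_mult_distrib infsum_cmult_right)

lemma nrm_uminus: "nrm (\<lambda>i. - w i) = nrm w" unfolding nrm_def by simp

lemma nrm_swap: "nrm (\<lambda>i. w i - h i) = nrm (\<lambda>i. h i - w i)"
  unfolding nrm_def by (simp add: norm_minus_commute)

lemma ip_cmult_right:
  assumes "w \<in> L2" "h \<in> L2"
  shows "ip w (\<lambda>i. a * h i) = cnj a * ip w h"
  unfolding ip_def using ip_summable[OF assms]
  by (simp add: infsum_cmult_right[symmetric] algebra_simps)

lemma ip_cmult_left:
  assumes "w \<in> L2" "h \<in> L2"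
  shows "ip (\<lambda>i. a * w i) h = a * ip w h"
  unfolding ip_def using ip_summable[OF assms]
  by (simp add: infsum_cmult_right[symmetric] algebra_simps)

lemma ip_add_left:
  assumes "w \<in> L2" "w' \<in> L2" "h \<in> L2"
  shows "ip (\<lambda>i. w i + w' i) h = ip w h + ip w' h"
  unfolding ip_def using ip_summable[OF assms(1,3)] ip_summable[OF assms(2,3)]
  by (simp add: infsum_add[symmetric] algebra_simps)

lemma ip_add_right:
  assumes "w \<in> L2" "h \<in> L2" "h' \<in> L2"
  shows "ip w (\<lambda>i. h i + h' i) = ip w h + ip w h'"
  unfolding ip_def using ip_summable[OF assms(1,2)] ip_summable[OF assms(1,3)]
  by (simp add: infsum_add[symmetric] algebra_simps)

lemma ip_cnj: "ip h w = cnj (ip w h)"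
  unfolding ip_def infsum_cnj[symmetric] by (simp add: mult.commute)

lemma parallelogram:
  assumes "w \<in> L2" "h \<in> L2"
  shows "nrm (\<lambda>i. w i + h i) + nrm (\<lambda>i. w i - h i) = 2 * nrm w + 2 * nrm h"
proof -
  have "nrm (\<lambda>i. w i - h i) = nrm (\<lambda>i. w i + (- h i))" by simp
  also have "\<dots> = nrm w + nrm (\<lambda>i. - h i) + 2 * Re (ip w (\<lambda>i. - h i))"
    by (rule nrm_add[OF assms(1) L2_uminus[OF assms(2)]])
  also have "ip w (\<lambda>i. - h i) = - ip w h"
    using ip_cmult_right[OF assms, of "-1"] by simp
  finally show ?thesis using nrm_add[OF assms] nrm_uminus[of h] by simp
qed

lemma sq_add_le_eta:
  fixes p q :: real assumes "\<eta> > 0"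
  shows "(p + q)\<^sup>2 \<le> (1 + \<eta>) * p\<^sup>2 + (1 + 1/\<eta>) * q\<^sup>2"
proof -
  have "0 \<le> (\<eta> * p - q)\<^sup>2 / \<eta>" using assms by simp
  also have "(\<eta> * p - q)\<^sup>2 / \<eta> = \<eta> * p\<^sup>2 - 2 * p * q + q\<^sup>2 / \<eta>"
    using assms by (simp add: power2_eq_square field_simps)
  finally show ?thesis by (simp add: power2_eq_square algebra_simps)
qed

lemma nrm_add_le:
  assumes "w \<in> L2" "h \<in> L2" "\<eta> > 0"
  shows "nrm (\<lambda>i. w i + h i) \<le> (1 + \<eta>) * nrm w + (1 + 1/\<eta>) * nrm h"
proof -
  have "nrm (\<lambda>i. w i + h i) \<le> (\<Sum>\<^sub>\<infinity>i. (1 + \<eta>) * (cmod (w i))\<^sup>2 + (1 + 1/\<eta>) * (cmod (h i))\<^sup>2)"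
    unfolding nrm_def
  proof (rule infsum_mono)
    show "(\<lambda>i. (cmod (w i + h i))\<^sup>2) summable_on UNIV" using L2_add[OF assms(1,2)] by (simp add: L2_def)
    show "(\<lambda>i. (1 + \<eta>) * (cmod (w i))\<^sup>2 + (1 + 1 / \<eta>) * (cmod (h i))\<^sup>2) summable_on UNIV"
      using assms unfolding L2_def by (auto intro!: summable_on_add summable_on_cmult_right)
    fix i
    have "(cmod (w i + h i))\<^sup>2 \<le> (cmod (w i) + cmod (h i))\<^sup>2"
      by (simp add: power_mono norm_triangle_ineq)
    also have "\<dots> \<le> (1 + \<eta>) * (cmod (w i))\<^sup>2 + (1 + 1/\<eta>) * (cmod (h i))\<^sup>2"
      by (rule sq_add_le_eta[OF assms(3)])
    finally show "(cmod (w i + h i))\<^sup>2 \<le> (1 + \<eta>) * (cmod (w i))\<^sup>2 + (1 + 1 / \<eta>) * (cmod (h i))\<^sup>2" .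
  qed
  also have "\<dots> = (1 + \<eta>) * nrm w + (1 + 1/\<eta>) * nrm h"
    using assms unfolding L2_def nrm_def
    by (simp add: infsum_add summable_on_cmult_right infsum_cmult_right)
  finally show ?thesis .
qed

lemma cauchy_schwarz_ip:
  assumes w: "w \<in> L2" and h: "h \<in> L2"
  shows "cmod (ip w h) \<le> sqrt (nrm w) * sqrt (nrm h)"
proof -
  have sabs: "(\<lambda>i. norm (w i * cnj (h i))) summable_on UNIV"
    using summable_on_iff_abs_summable_on_complex[THEN iffD1, OF ip_summable[OF w h]] .
  have le1: "cmod (ip w h) \<le> (\<Sum>\<^sub>\<infinity>i. cmod (w i) * cmod (h i))"
    unfolding ip_def using norm_infsum_bound[OF sabs] by (simp add: norm_mult)
  have le2: "(\<Sum>\<^sub>\<infinity>i. cmod (w i) * cmod (h i)) \<le> (t * nrm w + nrm h / t) / 2" if t: "t > 0" for t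
  proof -
    have sw: "(\<lambda>i. (cmod (w i))\<^sup>2) summable_on UNIV" and sh: "(\<lambda>i. (cmod (h i))\<^sup>2) summable_on UNIV"
      using w h unfolding L2_def by auto
    have s2: "(\<lambda>i. (t/2) * (cmod (w i))\<^sup>2 + (1/(2*t)) * (cmod (h i))\<^sup>2) summable_on UNIV"
      by (intro summable_on_add summable_on_cmult_right sw sh)
    have "(\<Sum>\<^sub>\<infinity>i. cmod (w i) * cmod (h i)) \<le> (\<Sum>\<^sub>\<infinity>i. (t/2) * (cmod (w i))\<^sup>2 + (1/(2*t)) * (cmod (h i))\<^sup>2)"
    proof (rule infsum_mono[OF _ s2])
      show "(\<lambda>i. cmod (w i) * cmod (h i)) summable_on UNIV"
        using sabs by (simp add: norm_mult)
      fix i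
      have "0 \<le> (t * cmod (w i) - cmod (h i))\<^sup>2 / t" using t by simp
      also have "(t * cmod (w i) - cmod (h i))\<^sup>2 / t = t * (cmod (w i))\<^sup>2 - 2 * cmod (w i) * cmod (h i) + (cmod (h i))\<^sup>2 / t"
        using t by (simp add: power2_eq_square field_simps)
      finally show "cmod (w i) * cmod (h i) \<le> (t/2) * (cmod (w i))\<^sup>2 + (1/(2*t)) * (cmod (h i))\<^sup>2"
        by (simp add: field_simps)
    qed
    also have "\<dots> = (t/2) * nrm w + (1/(2*t)) * nrm h"
      unfolding nrm_def
      by (simp only: infsum_add[OF summable_on_cmult_right[OF sw] summable_on_cmult_right[OF sh]]
          infsum_cmult_right[OF sw] infsum_cmult_right[OF sh])
    also have "\<dots> = (t * nrm w + nrm h / t) / 2" by (simp add: field_simps)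
    finally show ?thesis .
  qed
  show ?thesis
  proof (cases "nrm w = 0 \<or> nrm h = 0")
    case True
    hence "ip w h = 0" unfolding ip_def using nrm_zeroD[OF w] nrm_zeroD[OF h] by auto
    thus ?thesis by (simp add: real_sqrt_ge_zero nrm_nonneg)
  next
    case False
    define a where "a = sqrt (nrm w)"
    define c where "c = sqrt (nrm h)"
    have a: "a > 0" and c: "c > 0" using False nrm_nonneg[of w] nrm_nonneg[of h]
      unfolding a_def c_def by auto
    have na: "nrm w = a\<^sup>2" and nc: "nrm h = c\<^sup>2" using nrm_nonneg[of w] nrm_nonneg[of h]
      unfolding a_def c_def by auto
    have "cmod (ip w h) \<le> ((c / a) * nrm w + nrm h / (c / a)) / 2"
      using le1 le2[of "c/a"] a c by (simp add: divide_pos_pos)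
    also have "\<dots> = a * c" unfolding na nc using a c by (simp add: power2_eq_square field_simps)
    finally show ?thesis unfolding a_def c_def .
  qed
qed



definition Gf :: "('v\<Rightarrow>real) \<Rightarrow> ('v\<Rightarrow>'v\<Rightarrow>real) \<Rightarrow> ('v\<Rightarrow>real) \<Rightarrow> ('v \<Rightarrow> complex) \<Rightarrow> ('v\<times>'v \<Rightarrow> complex)" where
  "Gf m b c u = (\<lambda>(x,y). if x = y then complex_of_real (sqrt (2 * c x + 2 * m x)) * u x
                          else complex_of_real (sqrt (b x y)) * (u x - u y))"

definition wt :: "('v\<Rightarrow>real) \<Rightarrow> ('v \<Rightarrow> complex) \<Rightarrow> ('v \<Rightarrow> complex)" where
  "wt m u = (\<lambda>x. complex_of_real (sqrt (m x)) * u x)"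

definition dlt :: "'v \<Rightarrow> 'v \<Rightarrow> complex" where "dlt x = (\<lambda>y. if y = x then 1 else 0)"

lemma has_sum_diag:
  "((\<lambda>(x,y). if x = y then W x else 0) has_sum s) UNIV \<longleftrightarrow> (W has_sum s) UNIV"
proof -
  let ?g = "(\<lambda>(x,y). if x = y then W x else 0)"
  have "(?g has_sum s) UNIV \<longleftrightarrow> (?g has_sum s) (range (\<lambda>x. (x,x)))"
    by (rule has_sum_cong_neutral) auto
  also have "\<dots> \<longleftrightarrow> ((?g \<circ> (\<lambda>x. (x,x))) has_sum s) UNIV"
    by (rule has_sum_reindex) (auto simp: inj_on_def)
  also have "?g \<circ> (\<lambda>x. (x,x)) = W" by auto
  finally show ?thesis .
qed

lemma summable_diag:
  "(\<lambda>(x,y). if x = y then W x else 0) summable_on UNIV \<longleftrightarrow> W summable_on UNIV"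
  unfolding summable_on_def has_sum_diag ..

lemma infsum_diag:
  fixes W :: "'a \<Rightarrow> 'b::{topological_comm_monoid_add,t2_space}"
  shows "infsum (\<lambda>(x,y). if x = y then W x else 0) UNIV = infsum W UNIV"
proof (cases "W summable_on UNIV")
  case True
  then show ?thesis using has_sum_diag[of W "infsum W UNIV"] by (simp add: infsumI)
next
  case False
  then show ?thesis using summable_diag[of W] by (simp add: infsum_not_exists)
qed

lemma Gf_diff: "Gf m b c (\<lambda>x. u x - v x) = (\<lambda>i. Gf m b c u i - Gf m b c v i)"
  unfolding Gf_def by (auto simp: fun_eq_iff algebra_simps)
lemma Gf_add: "Gf m b c (\<lambda>x. u x + v x) = (\<lambda>i. Gf m b c u i + Gf m b c v i)"
  unfolding Gf_def by (auto simp: fun_eq_iff algebra_simps)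
lemma Gf_cmult: "Gf m b c (\<lambda>x. a * u x) = (\<lambda>i. a * Gf m b c u i)"
  unfolding Gf_def by (auto simp: fun_eq_iff algebra_simps)
lemma Gf_zero: "Gf m b c (\<lambda>x. 0) = (\<lambda>i. 0)"
  unfolding Gf_def by (auto simp: fun_eq_iff)
lemma wt_diff: "wt m (\<lambda>x. u x - v x) = (\<lambda>i. wt m u i - wt m v i)"
  unfolding wt_def by (auto simp: fun_eq_iff algebra_simps)
lemma wt_add: "wt m (\<lambda>x. u x + v x) = (\<lambda>i. wt m u i + wt m v i)"
  unfolding wt_def by (auto simp: fun_eq_iff algebra_simps)
lemma wt_cmult: "wt m (\<lambda>x. a * u x) = (\<lambda>i. a * wt m u i)"
  unfolding wt_def by (auto simp: fun_eq_iff algebra_simps)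

context
  fixes m :: "'v \<Rightarrow> real" and b :: "'v \<Rightarrow> 'v \<Rightarrow> real" and c :: "'v \<Rightarrow> real"
  assumes g: "graph_over m b c"
begin

lemma mpos: "m x > 0" using graph_overD[OF g] by auto
lemma mnn: "m x \<ge> 0" using mpos less_imp_le by blast
lemma cnn: "c x \<ge> 0" using graph_overD[OF g] by auto
lemma bnn: "b x y \<ge> 0" using graph_overD[OF g] by auto
lemma bdiag: "b x x = 0" using graph_overD[OF g] by auto
lemma bsym: "b x y = b y x" using graph_overD[OF g] by auto
lemma bsum: "(\<lambda>y. b x y) summable_on UNIV" by (rule graph_overD(6)[OF g])

lemma Gf_sq: "(cmod (Gf m b c u (x,y)))\<^sup>2 =
   (b x y * (cmod (u x - u y))\<^sup>2) + (if x = y then (2 * c x + 2 * m x) * (cmod (u x))\<^sup>2 else 0)"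
  using cnn[of x] mnn[of x] bnn[of x y] bdiag[of x]
  by (auto simp: Gf_def norm_mult power_mult_distrib)

lemma Gf_sq': "(cmod (Gf m b c u p))\<^sup>2 =
   (\<lambda>(x,y). b x y * (cmod (u x - u y))\<^sup>2) p + (\<lambda>(x,y). if x = y then (2 * c x + 2 * m x) * (cmod (u x))\<^sup>2 else 0) p"
  by (cases p) (simp add: Gf_sq)

lemma QN_L2: assumes "u \<in> QN_dom m b c" shows "Gf m b c u \<in> L2"
proof -
  have s1: "(\<lambda>(x,y). b x y * (cmod (u x - u y))\<^sup>2) summable_on UNIV"
    and s2: "(\<lambda>x. c x * (cmod (u x))\<^sup>2) summable_on UNIV"
    and s3: "(\<lambda>x. (cmod (u x))\<^sup>2 * m x) summable_on UNIV"
    using assms unfolding QN_dom_def l2_def by auto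
  have "(\<lambda>x. 2 * (c x * (cmod (u x))\<^sup>2) + 2 * ((cmod (u x))\<^sup>2 * m x)) summable_on UNIV"
    by (intro summable_on_add summable_on_cmult_right s2 s3)
  hence "(\<lambda>x. (2 * c x + 2 * m x) * (cmod (u x))\<^sup>2) summable_on UNIV"
    by (simp add: algebra_simps)
  hence s4: "(\<lambda>(x,y). if x = y then (2 * c x + 2 * m x) * (cmod (u x))\<^sup>2 else 0) summable_on UNIV"
    by (simp only: summable_diag)
  show ?thesis unfolding L2_def mem_Collect_eq Gf_sq'
    by (rule summable_on_add[OF s1 s4])
qed

lemma L2_pair: assumes "Gf m b c u \<in> L2"
  shows "(\<lambda>(x,y). b x y * (cmod (u x - u y))\<^sup>2) summable_on UNIV"
proof (rule summable_on_comparison_test)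
  show "(\<lambda>p. (cmod (Gf m b c u p))\<^sup>2) summable_on UNIV" using assms by (simp add: L2_def)
  fix p :: "'v \<times> 'v"
  show "(case p of (x, y) \<Rightarrow> b x y * (cmod (u x - u y))\<^sup>2) \<le> (cmod (Gf m b c u p))\<^sup>2"
    unfolding Gf_sq' using cnn mnn by (cases p) (auto intro!: mult_nonneg_nonneg)
  show "0 \<le> (case p of (x, y) \<Rightarrow> b x y * (cmod (u x - u y))\<^sup>2)"
    using bnn by (cases p) auto
qed

lemma L2_diagpart: assumes "Gf m b c u \<in> L2"
  shows "(\<lambda>x. (2 * c x + 2 * m x) * (cmod (u x))\<^sup>2) summable_on UNIV"
proof -
  have "(\<lambda>(x,y). if x = y then (2 * c x + 2 * m x) * (cmod (u x))\<^sup>2 else 0) summable_on UNIV"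
  proof (rule summable_on_comparison_test)
    show "(\<lambda>p. (cmod (Gf m b c u p))\<^sup>2) summable_on UNIV" using assms by (simp add: L2_def)
    fix p :: "'v \<times> 'v"
    show "(case p of (x, y) \<Rightarrow> if x = y then (2 * c x + 2 * m x) * (cmod (u x))\<^sup>2 else 0) \<le> (cmod (Gf m b c u p))\<^sup>2"
      unfolding Gf_sq' using bnn by (cases p) auto
    show "0 \<le> (case p of (x, y) \<Rightarrow> if x = y then (2 * c x + 2 * m x) * (cmod (u x))\<^sup>2 else 0)"
      using cnn mnn by (cases p) auto
  qed
  thus ?thesis by (simp only: summable_diag)
qed

lemma L2_QN: assumes "Gf m b c u \<in> L2" shows "u \<in> QN_dom m b c"
proof -
  have d: "(\<lambda>x. (2 * c x + 2 * m x) * (cmod (u x))\<^sup>2) summable_on UNIV" by (rule L2_diagpart[OF assms])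
  have "(\<lambda>x. (cmod (u x))\<^sup>2 * m x) summable_on UNIV"
    by (rule summable_on_comparison_test[OF d]) (use cnn mnn in \<open>auto simp: algebra_simps intro!: mult_nonneg_nonneg\<close>)
  moreover have "(\<lambda>x. c x * (cmod (u x))\<^sup>2) summable_on UNIV"
    by (rule summable_on_comparison_test[OF d]) (use cnn mnn in \<open>auto simp: algebra_simps intro!: mult_nonneg_nonneg\<close>)
  ultimately show ?thesis using L2_pair[OF assms] unfolding QN_dom_def l2_def by auto
qed

lemma Cc_QN: assumes "v \<in> Cc" shows "v \<in> QN_dom m b c"
proof -
  have fin: "finite {x. v x \<noteq> 0}" using Cc_finite[OF assms] .
  have "(\<lambda>x. (cmod (v x))\<^sup>2 * m x) summable_on UNIV"
    by (rule finite_nonzero_values_imp_summable_on) (rule finite_subset[OF _ fin], auto)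
  moreover have "(\<lambda>x. c x * (cmod (v x))\<^sup>2) summable_on UNIV"
    by (rule finite_nonzero_values_imp_summable_on) (rule finite_subset[OF _ fin], auto)
  ultimately show ?thesis using pair_summable_Cc[OF g assms] unfolding QN_dom_def l2_def by auto
qed

lemma Cc_L2: "v \<in> Cc \<Longrightarrow> Gf m b c v \<in> L2" using Cc_QN QN_L2 by blast

lemma E_pair_le: assumes "Gf m b c u \<in> L2"
  shows "infsum (\<lambda>(x,y). b x y * (cmod (u x - u y))\<^sup>2) UNIV \<le> nrm (Gf m b c u)"
  unfolding nrm_def
proof (rule infsum_mono[OF L2_pair[OF assms]])
  show "(\<lambda>p. (cmod (Gf m b c u p))\<^sup>2) summable_on UNIV" using assms by (simp add: L2_def)
  fix p :: "'v \<times> 'v"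
  show "(case p of (x, y) \<Rightarrow> b x y * (cmod (u x - u y))\<^sup>2) \<le> (cmod (Gf m b c u p))\<^sup>2"
    unfolding Gf_sq' using cnn mnn by (cases p) (auto intro!: mult_nonneg_nonneg)
qed

lemma E_diag_le: assumes "Gf m b c u \<in> L2"
  shows "infsum (\<lambda>x. (2 * c x + 2 * m x) * (cmod (u x))\<^sup>2) UNIV \<le> nrm (Gf m b c u)"
proof -
  have "infsum (\<lambda>x. (2 * c x + 2 * m x) * (cmod (u x))\<^sup>2) UNIV =
        infsum (\<lambda>(x,y). if x = y then (2 * c x + 2 * m x) * (cmod (u x))\<^sup>2 else 0) UNIV"
    by (rule infsum_diag[symmetric])
  also have "\<dots> \<le> nrm (Gf m b c u)"
    unfolding nrm_def
  proof (rule infsum_mono)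
    show "(\<lambda>(x,y). if x = y then (2 * c x + 2 * m x) * (cmod (u x))\<^sup>2 else 0) summable_on UNIV"
      using L2_diagpart[OF assms] by (simp only: summable_diag)
    show "(\<lambda>p. (cmod (Gf m b c u p))\<^sup>2) summable_on UNIV" using assms by (simp add: L2_def)
    fix p :: "'v \<times> 'v"
    show "(case p of (x, y) \<Rightarrow> if x = y then (2 * c x + 2 * m x) * (cmod (u x))\<^sup>2 else 0) \<le> (cmod (Gf m b c u p))\<^sup>2"
      unfolding Gf_sq' using bnn by (cases p) auto
  qed
  finally show ?thesis .
qed

lemma E_l2_le: assumes "Gf m b c u \<in> L2"
  shows "2 * nrm (wt m u) \<le> nrm (Gf m b c u)"
proof -
  have d: "(\<lambda>x. (2 * c x + 2 * m x) * (cmod (u x))\<^sup>2) summable_on UNIV" by (rule L2_diagpart[OF assms])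
  have s: "(\<lambda>x. 2 * (m x * (cmod (u x))\<^sup>2)) summable_on UNIV"
    by (rule summable_on_comparison_test[OF d]) (use cnn mnn in \<open>auto simp: algebra_simps intro!: mult_nonneg_nonneg\<close>)
  have "2 * nrm (wt m u) = infsum (\<lambda>x. 2 * (m x * (cmod (u x))\<^sup>2)) UNIV"
    unfolding nrm_def wt_def
    using summable_on_cmult_right[OF s, of "1/2"] mnn
    by (subst infsum_cmult_right) (auto simp: norm_mult power_mult_distrib)
  also have "\<dots> \<le> infsum (\<lambda>x. (2 * c x + 2 * m x) * (cmod (u x))\<^sup>2) UNIV"
    by (rule infsum_mono[OF s d]) (use cnn in \<open>auto simp: algebra_simps\<close>)
  also have "\<dots> \<le> nrm (Gf m b c u)" by (rule E_diag_le[OF assms])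
  finally show ?thesis .
qed

lemma E_c_le: assumes "Gf m b c u \<in> L2"
  shows "2 * infsum (\<lambda>x. c x * (cmod (u x))\<^sup>2) UNIV \<le> nrm (Gf m b c u)"
proof -
  have d: "(\<lambda>x. (2 * c x + 2 * m x) * (cmod (u x))\<^sup>2) summable_on UNIV" by (rule L2_diagpart[OF assms])
  have s: "(\<lambda>x. 2 * (c x * (cmod (u x))\<^sup>2)) summable_on UNIV"
    by (rule summable_on_comparison_test[OF d]) (use cnn mnn in \<open>auto simp: algebra_simps intro!: mult_nonneg_nonneg\<close>)
  have "2 * infsum (\<lambda>x. c x * (cmod (u x))\<^sup>2) UNIV = infsum (\<lambda>x. 2 * (c x * (cmod (u x))\<^sup>2)) UNIV"
    by (rule infsum_cmult_right[symmetric]) (use s in \<open>auto dest: summable_on_cmult_right[where c="1/2"]\<close>)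
  also have "\<dots> \<le> infsum (\<lambda>x. (2 * c x + 2 * m x) * (cmod (u x))\<^sup>2) UNIV"
    by (rule infsum_mono[OF s d]) (use mnn in \<open>auto simp: algebra_simps\<close>)
  also have "\<dots> \<le> nrm (Gf m b c u)" by (rule E_diag_le[OF assms])
  finally show ?thesis .
qed

lemma l2_wt: "u \<in> l2 m \<longleftrightarrow> wt m u \<in> L2"
  unfolding l2_def L2_def wt_def using mnn by (simp add: norm_mult power_mult_distrib mult.commute)

lemma l2norm_wt: "l2norm m u = sqrt (nrm (wt m u))"
  unfolding l2norm_def nrm_def wt_def using mnn by (simp add: norm_mult power_mult_distrib mult.commute)

lemma inner_wt: "inner_l2 m u v = ip (wt m u) (wt m v)"
  unfolding inner_l2_def ip_def wt_def
proof (rule infsum_cong)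
  fix x
  have "complex_of_real (m x) = complex_of_real (sqrt (m x)) * complex_of_real (sqrt (m x))"
    using mnn[of x] by (simp flip: of_real_mult)
  thus "u x * cnj (v x) * complex_of_real (m x) =
    complex_of_real (sqrt (m x)) * u x * cnj (complex_of_real (sqrt (m x)) * v x)"
    by (simp add: algebra_simps)
qed

lemma ReQN_le_E: assumes "v \<in> Cc" shows "Re (QN_val b c v v) \<le> nrm (Gf m b c v)"
proof -
  have L: "Gf m b c v \<in> L2" using Cc_L2[OF assms] .
  have e1: "(\<lambda>(x, y). complex_of_real (b x y) * (v x - v y) * cnj (v x - v y)) =
        (\<lambda>p. complex_of_real ((\<lambda>(x,y). b x y * (cmod (v x - v y))\<^sup>2) p))"
    by (rule ext) (auto simp only: ofr_sq split: prod.splits)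
  have e2: "(\<lambda>x. complex_of_real (c x) * v x * cnj (v x)) =
        (\<lambda>x. complex_of_real (c x * (cmod (v x))\<^sup>2))"
    by (rule ext) (simp only: ofr_sq)
  have "Re (QN_val b c v v) = (1/2) * infsum (\<lambda>(x,y). b x y * (cmod (v x - v y))\<^sup>2) UNIV
        + infsum (\<lambda>x. c x * (cmod (v x))\<^sup>2) UNIV"
    unfolding QN_val_def e1 e2 infsum_of_real_c by simp
  thus ?thesis using E_pair_le[OF L] E_c_le[OF L] by linarith
qed

end


lemma has_sum_single: "((\<lambda>w. if w = x then k else 0) has_sum k) UNIV"
proof -
  have "((\<lambda>w. if w = x then k else 0) has_sum k) {x}" using has_sum_finite[of "{x}" "\<lambda>w. if w = x then k else 0"] by simp
  thus ?thesis by (subst (asm) has_sum_cong_neutral[where T=UNIV]) auto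
qed

lemma has_sum_line1:
  assumes "(g has_sum s) UNIV"
  shows "((\<lambda>(a,y). if a = x then g y else 0) has_sum s) UNIV"
proof -
  let ?T = "(\<lambda>(a,y). if a = x then g y else 0)"
  have "((?T \<circ> Pair x) has_sum s) UNIV" using assms by (simp add: o_def)
  hence "(?T has_sum s) (range (Pair x))" by (subst has_sum_reindex) (auto simp: inj_on_def)
  thus ?thesis by (subst (asm) has_sum_cong_neutral[where T=UNIV]) auto
qed

lemma has_sum_line2:
  assumes "(g has_sum s) UNIV"
  shows "((\<lambda>(a,y). if y = x then g a else 0) has_sum s) UNIV"
proof -
  let ?T = "(\<lambda>(a,y). if y = x then g a else 0)"
  have "((?T \<circ> (\<lambda>a. (a,x))) has_sum s) UNIV" using assms by (simp add: o_def)
  hence "(?T has_sum s) (range (\<lambda>a. (a,x)))" by (subst has_sum_reindex) (auto simp: inj_on_def)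
  thus ?thesis by (subst (asm) has_sum_cong_neutral[where T=UNIV]) auto
qed

lemma Gf_sum: "Gf m b c (\<lambda>y. \<Sum>x\<in>S. a x * h x y) = (\<lambda>i. \<Sum>x\<in>S. a x * Gf m b c (h x) i)"
  unfolding Gf_def
  by (auto simp: fun_eq_iff sum_distrib_left sum_distrib_right mult_ac sum_subtractf[symmetric] right_diff_distrib)

lemma ip_sum_left:
  assumes "finite S" "\<And>x. x \<in> S \<Longrightarrow> h x \<in> L2" "w \<in> L2"
  shows "ip (\<lambda>i. \<Sum>x\<in>S. a x * h x i) w = (\<Sum>x\<in>S. a x * ip (h x) w)"
proof -
  have "((\<lambda>i. \<Sum>x\<in>S. a x * (h x i * cnj (w i))) has_sum (\<Sum>x\<in>S. a x * ip (h x) w)) UNIV"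
    by (rule has_sum_sum_fun[OF assms(1)])
       (use assms in \<open>auto simp: ip_def intro!: has_sum_cmult_right has_sum_infsum ip_summable\<close>)
  moreover have "(\<lambda>i. (\<Sum>x\<in>S. a x * h x i) * cnj (w i)) = (\<lambda>i. \<Sum>x\<in>S. a x * (h x i * cnj (w i)))"
    by (simp add: sum_distrib_right mult.assoc)
  ultimately show ?thesis unfolding ip_def by (simp add: infsumI)
qed

context
  fixes m :: "'v \<Rightarrow> real" and b :: "'v \<Rightarrow> 'v \<Rightarrow> real" and c :: "'v \<Rightarrow> real"
  assumes g: "graph_over m b c"
begin

lemma section_summable:
  assumes L: "Gf m b c u \<in> L2"
  shows "(\<lambda>y. complex_of_real (b x y) * (u x - u y)) summable_on UNIV"
proof -
  have P: "(\<lambda>(x,y). b x y * (cmod (u x - u y))\<^sup>2) summable_on Sigma UNIV (\<lambda>_. UNIV)"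
    using L2_pair[OF g L] by simp
  have s1: "(\<lambda>y. b x y * (cmod (u x - u y))\<^sup>2) summable_on UNIV"
    using summable_on_SigmaD1[OF P, of x] by simp
  have s: "(\<lambda>y. b x y + b x y * (cmod (u x - u y))\<^sup>2) summable_on UNIV"
    by (intro summable_on_add bsum[OF g] s1)
  have "(\<lambda>y. norm (complex_of_real (b x y) * (u x - u y))) summable_on UNIV"
  proof (rule summable_on_comparison_test[OF s])
    fix y
    have d: "cmod (u x - u y) \<le> 1 + (cmod (u x - u y))\<^sup>2"
    proof (cases "cmod (u x - u y) \<le> 1")
      case True thus ?thesis by (smt (verit) zero_le_power2)
    next
      case False thus ?thesis by (smt (verit) power2_eq_square mult_le_cancel_left1)
    qed
    have "b x y * cmod (u x - u y) \<le> b x y * (1 + (cmod (u x - u y))\<^sup>2)"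
      by (rule mult_left_mono[OF d bnn[OF g]])
    moreover have "norm (complex_of_real (b x y) * (u x - u y)) = b x y * cmod (u x - u y)"
      by (simp only: norm_mult norm_of_real abs_of_nonneg[OF bnn[OF g]])
    ultimately show "norm (complex_of_real (b x y) * (u x - u y)) \<le> b x y + b x y * (cmod (u x - u y))\<^sup>2"
      by (simp add: algebra_simps)
  qed (simp)
  thus ?thesis using summable_on_iff_abs_summable_on_complex by blast
qed

lemma Ltilde_mx: "complex_of_real (m x) * Ltilde m b c u x =
   (\<Sum>\<^sub>\<infinity>y. complex_of_real (b x y) * (u x - u y)) + complex_of_real (c x) * u x"
proof -
  have e1: "complex_of_real (m x) * complex_of_real (1 / m x) = 1"
    using mpos[OF g, of x] by (simp flip: of_real_mult)
  have "m x * (c x / m x) = c x" using mpos[OF g, of x] by simp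
  hence e2: "complex_of_real (m x) * complex_of_real (c x / m x) = complex_of_real (c x)"
    by (simp only: of_real_mult[symmetric])
  show ?thesis unfolding Ltilde_def distrib_left mult.assoc[symmetric] e1 e2 by simp
qed

lemma B_dlt:
  assumes L: "Gf m b c u \<in> L2"
  shows "ip (Gf m b c u) (Gf m b c (dlt x)) = 2 * complex_of_real (m x) * (Ltilde m b c u x + u x)"
proof -
  define Sx where "Sx = (\<Sum>\<^sub>\<infinity>y. complex_of_real (b x y) * (u x - u y))"
  have sec: "((\<lambda>y. complex_of_real (b x y) * (u x - u y)) has_sum Sx) UNIV"
    unfolding Sx_def using section_summable[OF L] by (simp add: has_sum_infsum)
  define T0 where "T0 = (\<lambda>(a::'v,y::'v). if a = x then (if y = x then complex_of_real (2 * c x + 2 * m x) * u x else 0) else 0)"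
  define T1 where "T1 = (\<lambda>(a::'v,y::'v). if a = x then complex_of_real (b x y) * (u x - u y) else 0)"
  define T2 where "T2 = (\<lambda>(a::'v,y::'v). if y = x then - (complex_of_real (b x a) * (u x - u a)) else 0)"
  have h0: "(T0 has_sum (complex_of_real (2 * c x + 2 * m x) * u x)) UNIV"
    unfolding T0_def by (rule has_sum_line1) (rule has_sum_single)
  have h1: "(T1 has_sum Sx) UNIV" unfolding T1_def by (rule has_sum_line1[OF sec])
  have h2: "(T2 has_sum (- Sx)) UNIV" unfolding T2_def
    by (rule has_sum_line2) (simp add: has_sum_uminus sec)
  have hT: "((\<lambda>p. T0 p + T1 p - T2 p) has_sum (complex_of_real (2 * c x + 2 * m x) * u x + Sx - - Sx)) UNIV"
    by (intro has_sum_diff has_sum_add h0 h1 h2)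
  have eq: "Gf m b c u p * cnj (Gf m b c (dlt x) p) = T0 p + T1 p - T2 p" for p
  proof -
    obtain a y where p: "p = (a,y)" by force
    have sq1: "complex_of_real (sqrt (2 * c a + 2 * m a)) * complex_of_real (sqrt (2 * c a + 2 * m a)) = complex_of_real (2 * c a + 2 * m a)"
      using cnn[OF g, of a] mnn[OF g, of a] by (simp flip: of_real_mult)
    have sq2: "complex_of_real (sqrt (b a y)) * complex_of_real (sqrt (b a y)) = complex_of_real (b a y)"
      using bnn[OF g, of a y] by (simp flip: of_real_mult)
    show ?thesis
    proof (cases "a = y")
      case True
      thus ?thesis using sq1 bdiag[OF g, of x] unfolding p T0_def T1_def T2_def Gf_def dlt_def
        by (auto simp: algebra_simps)
    next
      case False
      have "Gf m b c u p * cnj (Gf m b c (dlt x) p) =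
            complex_of_real (sqrt (b a y)) * complex_of_real (sqrt (b a y)) * (u a - u y) * (dlt x a - dlt x y)"
        unfolding p Gf_def using False by (simp add: dlt_def algebra_simps)
      also have "\<dots> = complex_of_real (b a y) * (u a - u y) * (dlt x a - dlt x y)" by (simp only: sq2)
      also have "\<dots> = T0 p + T1 p - T2 p"
        using False bsym[OF g, of a y] unfolding p T0_def T1_def T2_def dlt_def
        by (auto simp: algebra_simps)
      finally show ?thesis .
    qed
  qed
  have "ip (Gf m b c u) (Gf m b c (dlt x)) = complex_of_real (2 * c x + 2 * m x) * u x + Sx - - Sx"
    unfolding ip_def eq using hT by (simp add: infsumI)
  also have "\<dots> = 2 * (Sx + complex_of_real (c x) * u x) + 2 * complex_of_real (m x) * u x"
    by (simp add: algebra_simps)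
  also have "Sx + complex_of_real (c x) * u x = complex_of_real (m x) * Ltilde m b c u x"
    unfolding Sx_def Ltilde_mx ..
  finally show ?thesis by (simp add: algebra_simps)
qed

end


lemma dlt_Cc: "dlt x \<in> Cc"
  unfolding Cc_def dlt_def by (auto intro: finite_subset[of _ "{x}"])

lemma Cc_decomp:
  assumes "v \<in> Cc"
  shows "v = (\<lambda>y. \<Sum>x\<in>{x. v x \<noteq> 0}. v x * dlt x y)"
proof
  fix y
  have fin: "finite {x. v x \<noteq> 0}" using Cc_finite[OF assms] .
  have "(\<Sum>x\<in>{x. v x \<noteq> 0}. v x * dlt x y) = (\<Sum>x\<in>{x. v x \<noteq> 0}. if x = y then v y else 0)"
    by (rule sum.cong) (auto simp: dlt_def)
  also have "\<dots> = v y" using fin by (simp add: sum.delta)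
  finally show "v y = (\<Sum>x\<in>{x. v x \<noteq> 0}. v x * dlt x y)" by simp
qed

lemma ip_self: "ip w w = complex_of_real (nrm w)"
  unfolding ip_def nrm_def infsum_of_real_c[symmetric]
  by (rule infsum_cong) (rule complex_norm_square[symmetric])

context
  fixes m :: "'v \<Rightarrow> real" and b :: "'v \<Rightarrow> 'v \<Rightarrow> real" and c :: "'v \<Rightarrow> real"
  assumes g: "graph_over m b c"
begin

lemma sec_dlt:
  "((\<lambda>w. complex_of_real (b y w) * (dlt x y - dlt x w)) has_sum
     (if y = x then complex_of_real (infsum (b x) UNIV) else - complex_of_real (b y x))) UNIV"
proof (cases "y = x")
  case True
  have "(\<lambda>w. complex_of_real (b y w) * (dlt x y - dlt x w)) = (\<lambda>w. complex_of_real (b x w))"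
    using True bdiag[OF g, of x] by (auto simp: dlt_def fun_eq_iff)
  moreover have "((\<lambda>w. complex_of_real (b x w)) has_sum complex_of_real (infsum (b x) UNIV)) UNIV"
    by (rule has_sum_of_real) (use bsum[OF g, of x] in \<open>simp add: has_sum_infsum\<close>)
  ultimately show ?thesis using True by simp
next
  case False
  have "(\<lambda>w. complex_of_real (b y w) * (dlt x y - dlt x w)) = (\<lambda>w. if w = x then - complex_of_real (b y x) else 0)"
    using False by (auto simp: dlt_def fun_eq_iff)
  thus ?thesis using False has_sum_single by simp
qed

lemma mLtilde_dlt:
  "complex_of_real (m y) * Ltilde m b c (dlt x) y =
     (if y = x then complex_of_real (infsum (b x) UNIV + c x) else - complex_of_real (b y x))"
  unfolding Ltilde_mx[OF g] using infsumI[OF sec_dlt[of y x]]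
  by (auto simp: dlt_def)

lemma inner_dlt_left: "inner_l2 m (dlt x) u = cnj (u x) * complex_of_real (m x)"
proof -
  have "(\<lambda>y. dlt x y * cnj (u y) * complex_of_real (m y)) = (\<lambda>y. if y = x then cnj (u x) * complex_of_real (m x) else 0)"
    by (auto simp: dlt_def fun_eq_iff)
  thus ?thesis unfolding inner_l2_def by (simp only:) (rule infsumI[OF has_sum_single])
qed

lemma Green_dlt:
  assumes L: "Gf m b c u \<in> L2"
  shows "inner_l2 m (Ltilde m b c (dlt x)) u = cnj (complex_of_real (m x) * Ltilde m b c u x)"
proof -
  define Sx where "Sx = (\<Sum>\<^sub>\<infinity>y. complex_of_real (b x y) * (u x - u y))"
  have sec: "((\<lambda>y. complex_of_real (b x y) * (u x - u y)) has_sum Sx) UNIV"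
    unfolding Sx_def using section_summable[OF g L] by (simp add: has_sum_infsum)
  define d where "d = infsum (b x) UNIV"
  have hb: "((\<lambda>y. complex_of_real (b x y)) has_sum complex_of_real d) UNIV"
    unfolding d_def by (rule has_sum_of_real) (use bsum[OF g, of x] in \<open>simp add: has_sum_infsum\<close>)
  have hA: "((\<lambda>y. complex_of_real (b x y) * cnj (u x) - cnj (complex_of_real (b x y) * (u x - u y)))
              has_sum (complex_of_real d * cnj (u x) - cnj Sx)) UNIV"
    by (intro has_sum_diff has_sum_cmult_left hb) (rule has_sum_cnj_iff[THEN iffD2, OF sec])
  have hB: "((\<lambda>y. if y = x then complex_of_real (d + c x) * cnj (u x) else 0) has_sum
             complex_of_real (d + c x) * cnj (u x)) UNIV" by (rule has_sum_single)
  have hT: "((\<lambda>y. (if y = x then complex_of_real (d + c x) * cnj (u x) else 0) -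
              (complex_of_real (b x y) * cnj (u x) - cnj (complex_of_real (b x y) * (u x - u y))))
          has_sum (complex_of_real (d + c x) * cnj (u x) - (complex_of_real d * cnj (u x) - cnj Sx))) UNIV"
    by (rule has_sum_diff[OF hB hA])
  have eq: "Ltilde m b c (dlt x) y * cnj (u y) * complex_of_real (m y) =
        (if y = x then complex_of_real (d + c x) * cnj (u x) else 0) -
              (complex_of_real (b x y) * cnj (u x) - cnj (complex_of_real (b x y) * (u x - u y)))" for y
  proof -
    have "Ltilde m b c (dlt x) y * cnj (u y) * complex_of_real (m y) =
          (complex_of_real (m y) * Ltilde m b c (dlt x) y) * cnj (u y)" by (simp add: algebra_simps)
    also have "\<dots> = (if y = x then complex_of_real (d + c x) else - complex_of_real (b y x)) * cnj (u y)"
      unfolding mLtilde_dlt d_def ..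
    finally show ?thesis using bdiag[OF g, of x] bsym[OF g, of x y] by (auto simp: algebra_simps)
  qed
  have "inner_l2 m (Ltilde m b c (dlt x)) u = complex_of_real (d + c x) * cnj (u x) - (complex_of_real d * cnj (u x) - cnj Sx)"
    unfolding inner_l2_def eq using hT by (simp add: infsumI)
  also have "\<dots> = cnj (Sx + complex_of_real (c x) * u x)" by (simp add: algebra_simps)
  also have "Sx + complex_of_real (c x) * u x = complex_of_real (m x) * Ltilde m b c u x"
    unfolding Sx_def Ltilde_mx[OF g] ..
  finally show ?thesis .
qed

lemma Ltilde_decomp:
  assumes "finite S"
  shows "Ltilde m b c (\<lambda>y. \<Sum>x\<in>S. a x * dlt x y) = (\<lambda>y. \<Sum>x\<in>S. a x * Ltilde m b c (dlt x) y)"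
proof
  fix y
  define I where "I x = (if y = x then complex_of_real (infsum (b x) UNIV) else - complex_of_real (b y x))" for x
  have "((\<lambda>w. \<Sum>x\<in>S. a x * (complex_of_real (b y w) * (dlt x y - dlt x w))) has_sum (\<Sum>x\<in>S. a x * I x)) UNIV"
    by (rule has_sum_sum_fun[OF assms]) (unfold I_def, intro has_sum_cmult_right sec_dlt)
  moreover have "(\<lambda>w. \<Sum>x\<in>S. a x * (complex_of_real (b y w) * (dlt x y - dlt x w))) =
      (\<lambda>w. complex_of_real (b y w) * ((\<Sum>x\<in>S. a x * dlt x y) - (\<Sum>x\<in>S. a x * dlt x w)))"
    by (simp add: fun_eq_iff sum_distrib_left sum_subtractf[symmetric] algebra_simps)
  ultimately have e: "(\<Sum>\<^sub>\<infinity>w. complex_of_real (b y w) * ((\<Sum>x\<in>S. a x * dlt x y) - (\<Sum>x\<in>S. a x * dlt x w)))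
      = (\<Sum>x\<in>S. a x * I x)" by (simp add: infsumI)
  have e2: "(\<Sum>\<^sub>\<infinity>w. complex_of_real (b y w) * (dlt x y - dlt x w)) = I x" for x
    unfolding I_def by (rule infsumI[OF sec_dlt])
  have alg: "k1 * (\<Sum>x\<in>S. a x * J x) + k2 * (\<Sum>x\<in>S. a x * D x) = (\<Sum>x\<in>S. a x * (k1 * J x + k2 * D x))"
    for k1 k2 :: complex and J D
    by (simp add: sum_distrib_left distrib_left sum.distrib mult.left_commute)
  show "Ltilde m b c (\<lambda>y. \<Sum>x\<in>S. a x * dlt x y) y = (\<Sum>x\<in>S. a x * Ltilde m b c (dlt x) y)"
    unfolding Ltilde_def e
    by (subst alg) (simp add: e2)
qed

lemma inner_sum_left:
  assumes "finite S" "\<And>x. x \<in> S \<Longrightarrow> h x \<in> l2 m" "u \<in> l2 m"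
  shows "inner_l2 m (\<lambda>y. \<Sum>x\<in>S. a x * h x y) u = (\<Sum>x\<in>S. a x * inner_l2 m (h x) u)"
proof -
  have "wt m (\<lambda>y. \<Sum>x\<in>S. a x * h x y) = (\<lambda>i. \<Sum>x\<in>S. a x * wt m (h x) i)"
    unfolding wt_def by (simp add: fun_eq_iff sum_distrib_left mult_ac)
  thus ?thesis unfolding inner_wt[OF g]
    using ip_sum_left[OF assms(1), of "\<lambda>x. wt m (h x)" "wt m u" a] assms l2_wt[OF g] by simp
qed

lemma ip_Gf_Cc:
  assumes v: "v \<in> Cc" and L: "Gf m b c u \<in> L2"
  shows "ip (Gf m b c v) (Gf m b c u) = (\<Sum>x\<in>{x. v x \<noteq> 0}. v x * cnj (ip (Gf m b c u) (Gf m b c (dlt x))))"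
proof -
  let ?S = "{x. v x \<noteq> 0}"
  have "ip (Gf m b c v) (Gf m b c u) = ip (Gf m b c (\<lambda>y. \<Sum>x\<in>?S. v x * dlt x y)) (Gf m b c u)"
    using Cc_decomp[OF v] by simp
  also have "\<dots> = (\<Sum>x\<in>?S. v x * ip (Gf m b c (dlt x)) (Gf m b c u))"
    unfolding Gf_sum by (rule ip_sum_left[OF Cc_finite[OF v] Cc_L2[OF g dlt_Cc] L])
  finally show ?thesis by (simp add: ip_cnj[of "Gf m b c u"])
qed

lemma Key:
  assumes FC: "FC m b c" and v: "v \<in> Cc" and L: "Gf m b c u \<in> L2"
  shows "inner_l2 m (Ltilde m b c v) u = ip (Gf m b c v) (Gf m b c u) / 2 - inner_l2 m v u"
proof -
  let ?S = "{x. v x \<noteq> 0}"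
  have fin: "finite ?S" using Cc_finite[OF v] .
  have uL: "u \<in> l2 m" using L2_QN[OF g L] unfolding QN_dom_def by auto
  have Ld: "Ltilde m b c (dlt x) \<in> l2 m" for x using FC[unfolded FC_def] dlt_Cc by (rule bspec)
  have dl: "dlt x \<in> l2 m" for x using Cc_QN[OF g dlt_Cc] unfolding QN_dom_def by auto
  have "inner_l2 m (Ltilde m b c v) u = inner_l2 m (\<lambda>y. \<Sum>x\<in>?S. v x * Ltilde m b c (dlt x) y) u"
    using Cc_decomp[OF v] Ltilde_decomp[OF fin, of v] by metis
  also have "\<dots> = (\<Sum>x\<in>?S. v x * cnj (complex_of_real (m x) * Ltilde m b c u x))"
    by (simp add: inner_sum_left[OF fin Ld uL] Green_dlt[OF L])
  finally have lhs: "inner_l2 m (Ltilde m b c v) u = (\<Sum>x\<in>?S. v x * cnj (complex_of_real (m x) * Ltilde m b c u x))" .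
  have "inner_l2 m v u = inner_l2 m (\<lambda>y. \<Sum>x\<in>?S. v x * dlt x y) u"
    using Cc_decomp[OF v] by metis
  also have "\<dots> = (\<Sum>x\<in>?S. v x * (cnj (u x) * complex_of_real (m x)))"
    by (simp add: inner_sum_left[OF fin dl uL] inner_dlt_left)
  finally have i2: "inner_l2 m v u = (\<Sum>x\<in>?S. v x * (cnj (u x) * complex_of_real (m x)))" .
  have i3: "ip (Gf m b c v) (Gf m b c u) = (\<Sum>x\<in>?S. v x * cnj (2 * complex_of_real (m x) * (Ltilde m b c u x + u x)))"
    unfolding ip_Gf_Cc[OF v L] B_dlt[OF g L] ..
  show ?thesis unfolding lhs i2 i3 sum_divide_distrib sum_subtractf[symmetric]
    by (rule sum.cong) (simp_all add: algebra_simps)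
qed

lemma positivity:
  assumes FC: "FC m b c" and v: "v \<in> Cc"
  shows "Re (inner_l2 m (Ltilde m b c v) v) \<ge> 0"
proof -
  have L: "Gf m b c v \<in> L2" by (rule Cc_L2[OF g v])
  have k: "inner_l2 m (Ltilde m b c v) v = ip (Gf m b c v) (Gf m b c v) / 2 - inner_l2 m v v"
    by (rule Key[OF FC v L])
  have k2: "inner_l2 m v v = complex_of_real (nrm (wt m v))" by (simp add: inner_wt[OF g] ip_self)
  have "Re (inner_l2 m (Ltilde m b c v) v) = nrm (Gf m b c v) / 2 - nrm (wt m v)"
    unfolding k k2 ip_self by simp
  thus ?thesis using E_l2_le[OF g L] by simp
qed

end


lemma lim_helper:
  fixes a b cc :: real
  assumes "\<And>n. a \<le> b + cc / real (Suc n)"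
  shows "a \<le> b"
proof -
  have "(\<lambda>n. b + cc * inverse (real (Suc n))) \<longlonglongrightarrow> b + cc * 0"
    by (intro tendsto_intros LIMSEQ_inverse_real_of_nat)
  hence "(\<lambda>n. b + cc / real (Suc n)) \<longlonglongrightarrow> b" by (simp add: divide_inverse)
  thus ?thesis by (rule LIMSEQ_le_const) (use assms in auto)
qed

lemma small_seq:
  fixes C e :: real
  assumes C: "C \<ge> 0" and e: "e > 0"
  shows "\<exists>N. \<forall>n\<ge>N. C / real (Suc n) < e"
proof -
  obtain N where N: "inverse (real (Suc N)) < e / (C + 1)"
    using reals_Archimedean[of "e / (C+1)"] C e by auto
  have "C / real (Suc n) < e" if "n \<ge> N" for n
  proof -
    have "C / real (Suc n) \<le> (C + 1) / real (Suc n)" by (simp add: divide_right_mono)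
    also have "\<dots> \<le> (C + 1) / real (Suc N)" using that C by (intro divide_left_mono) auto
    also have "\<dots> = (C + 1) * inverse (real (Suc N))" by (simp add: divide_inverse)
    also have "\<dots> < (C + 1) * (e / (C + 1))" using N C by (intro mult_strict_left_mono) auto
    also have "\<dots> = e" using C by simp
    finally show ?thesis .
  qed
  thus ?thesis by blast
qed

lemma nrm_triangle:
  assumes "w \<in> L2" "h \<in> L2"
  shows "sqrt (nrm (\<lambda>i. w i + h i)) \<le> sqrt (nrm w) + sqrt (nrm h)"
proof -
  have "nrm (\<lambda>i. w i + h i) = nrm w + nrm h + 2 * Re (ip w h)" by (rule nrm_add[OF assms])
  also have "Re (ip w h) \<le> sqrt (nrm w) * sqrt (nrm h)"
    using cauchy_schwarz_ip[OF assms] complex_Re_le_cmod[of "ip w h"] by linarith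
  hence "nrm w + nrm h + 2 * Re (ip w h) \<le> (sqrt (nrm w) + sqrt (nrm h))\<^sup>2"
    using nrm_nonneg[of w] nrm_nonneg[of h] by (simp add: power2_sum)
  finally have "nrm (\<lambda>i. w i + h i) \<le> (sqrt (nrm w) + sqrt (nrm h))\<^sup>2" by simp
  hence "sqrt (nrm (\<lambda>i. w i + h i)) \<le> sqrt ((sqrt (nrm w) + sqrt (nrm h))\<^sup>2)" by (rule real_sqrt_le_mono)
  thus ?thesis using nrm_nonneg[of w] nrm_nonneg[of h] by simp
qed

lemma ip_cont:
  assumes aL: "\<And>n. a n \<in> L2" and a0: "a0 \<in> L2" and hL: "\<And>n. h n \<in> L2" and h0: "h0 \<in> L2"
    and ca: "(\<lambda>n. sqrt (nrm (\<lambda>i. a n i - a0 i))) \<longlonglongrightarrow> 0"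
    and ch: "(\<lambda>n. sqrt (nrm (\<lambda>i. h n i - h0 i))) \<longlonglongrightarrow> 0"
  shows "(\<lambda>n. ip (a n) (h n)) \<longlonglongrightarrow> ip a0 h0"
proof -
  define e where "e n = sqrt (nrm (\<lambda>i. a n i - a0 i))" for n
  define d where "d n = sqrt (nrm (\<lambda>i. h n i - h0 i))" for n
  have bound: "norm (ip (a n) (h n) - ip a0 h0) \<le> e n * (d n + sqrt (nrm h0)) + sqrt (nrm a0) * d n" for n
  proof -
    have da: "(\<lambda>i. a n i - a0 i) \<in> L2" by (rule L2_diff[OF aL a0])
    have dh: "(\<lambda>i. h n i - h0 i) \<in> L2" by (rule L2_diff[OF hL h0])
    have e1: "ip (a n) (h n) = ip (\<lambda>i. a n i - a0 i) (h n) + ip a0 (h n)"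
      using ip_add_left[OF da a0 hL, of n] by simp
    have e2: "ip a0 (h n) = ip a0 (\<lambda>i. h n i - h0 i) + ip a0 h0"
      using ip_add_right[OF a0 dh h0] by simp
    have "norm (ip (a n) (h n) - ip a0 h0) = norm (ip (\<lambda>i. a n i - a0 i) (h n) + ip a0 (\<lambda>i. h n i - h0 i))"
      unfolding e1 e2 by simp
    also have "\<dots> \<le> norm (ip (\<lambda>i. a n i - a0 i) (h n)) + norm (ip a0 (\<lambda>i. h n i - h0 i))"
      by (rule norm_triangle_ineq)
    also have "\<dots> \<le> e n * sqrt (nrm (h n)) + sqrt (nrm a0) * d n"
      unfolding e_def d_def by (intro add_mono cauchy_schwarz_ip da dh a0 hL)
    also have "sqrt (nrm (h n)) \<le> d n + sqrt (nrm h0)"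
      using nrm_triangle[OF dh h0] unfolding d_def by simp
    hence "e n * sqrt (nrm (h n)) \<le> e n * (d n + sqrt (nrm h0))"
      unfolding e_def by (intro mult_left_mono) (auto simp: nrm_nonneg)
    finally show ?thesis by simp
  qed
  have "(\<lambda>n. e n * (d n + sqrt (nrm h0)) + sqrt (nrm a0) * d n) \<longlonglongrightarrow> 0 * (0 + sqrt (nrm h0)) + sqrt (nrm a0) * 0"
    using ca ch unfolding e_def[symmetric] d_def[symmetric] by (intro tendsto_intros)
  hence lim0: "(\<lambda>n. e n * (d n + sqrt (nrm h0)) + sqrt (nrm a0) * d n) \<longlonglongrightarrow> 0" by simp
  have ev: "\<forall>\<^sub>F n in sequentially. norm (ip (a n) (h n) - ip a0 h0) \<le> e n * (d n + sqrt (nrm h0)) + sqrt (nrm a0) * d n"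
    using bound by (intro always_eventually) blast
  have "(\<lambda>n. ip (a n) (h n) - ip a0 h0) \<longlonglongrightarrow> 0"
    by (rule Lim_null_comparison[OF ev lim0])
  from tendsto_add[OF this tendsto_const[of "ip a0 h0"]] show ?thesis by simp
qed



lemma Gf_tendsto:
  assumes "\<And>x. (\<lambda>k. u k x) \<longlonglongrightarrow> U x"
  shows "(\<lambda>k. Gf m b c (u k) i) \<longlonglongrightarrow> Gf m b c U i"
  by (cases i) (auto simp: Gf_def intro!: tendsto_intros assms)

lemma Cc_lin: "u \<in> Cc \<Longrightarrow> v \<in> Cc \<Longrightarrow> (\<lambda>x. a * u x + a' * v x) \<in> Cc"
  unfolding Cc_def by (auto intro: finite_subset[of _ "{x. u x \<noteq> 0} \<union> {x. v x \<noteq> 0}"])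

lemma Cc_zero: "(\<lambda>x. 0) \<in> Cc" unfolding Cc_def by simp

context
  fixes m :: "'v \<Rightarrow> real" and b :: "'v \<Rightarrow> 'v \<Rightarrow> real" and c :: "'v \<Rightarrow> real"
  assumes g: "graph_over m b c"
begin

lemma pw_bound:
  assumes L: "Gf m b c u \<in> L2"
  shows "(cmod (u x))\<^sup>2 \<le> nrm (Gf m b c u) / (2 * m x)"
proof -
  have wL: "wt m u \<in> L2" using L2_QN[OF g L] l2_wt[OF g] unfolding QN_dom_def by auto
  have "m x * (cmod (u x))\<^sup>2 = (cmod (wt m u x))\<^sup>2"
    using mnn[OF g, of x] by (simp add: wt_def norm_mult power_mult_distrib)
  also have "\<dots> \<le> nrm (wt m u)" by (rule nrm_single[OF wL])
  finally have "2 * (m x * (cmod (u x))\<^sup>2) \<le> nrm (Gf m b c u)" using E_l2_le[OF g L] by linarith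
  thus ?thesis using mpos[OF g, of x] by (simp add: field_simps)
qed

lemma exists_g:
  assumes f: "f \<in> QN_dom m b c" and nf: "f \<notin> QD_dom m b c"
  shows "\<exists>gg. Gf m b c gg \<in> L2 \<and> nrm (Gf m b c gg) > 0 \<and> (\<forall>x. ip (Gf m b c gg) (Gf m b c (dlt x)) = 0)"
proof -
  define E where "E u = nrm (Gf m b c u)" for u
  have Enn: "E u \<ge> 0" for u unfolding E_def by (rule nrm_nonneg)
  have Lf: "Gf m b c f \<in> L2" by (rule QN_L2[OF g f])
  have LfC: "Gf m b c (\<lambda>x. f x - \<phi> x) \<in> L2" if "\<phi> \<in> Cc" for \<phi>
    using L2_diff[OF Lf Cc_L2[OF g that]] by (simp add: Gf_diff)
  define A where "A = {E (\<lambda>x. f x - \<phi> x) | \<phi>. \<phi> \<in> Cc}"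
  define \<delta> where "\<delta> = Inf A"
  have Ane: "A \<noteq> {}" unfolding A_def using Cc_zero by blast
  have Abd: "bdd_below A" unfolding A_def using Enn by (auto intro!: bdd_belowI[of _ 0])
  have low: "\<delta> \<le> E (\<lambda>x. f x - \<phi> x)" if "\<phi> \<in> Cc" for \<phi>
    unfolding \<delta>_def by (rule cInf_lower[OF _ Abd]) (use that in \<open>auto simp: A_def\<close>)
  have \<delta>nn: "\<delta> \<ge> 0" unfolding \<delta>_def by (rule cInf_greatest[OF Ane]) (use Enn in \<open>auto simp: A_def\<close>)
  have "\<exists>\<phi>. \<phi> \<in> Cc \<and> E (\<lambda>x. f x - \<phi> x) < \<delta> + 1 / real (Suc n)" for n
  proof -
    have "Inf A < \<delta> + 1 / real (Suc n)" unfolding \<delta>_def by simp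
    from cInf_lessD[OF Ane this] show ?thesis unfolding A_def by auto
  qed
  then obtain \<phi> where \<phi>C: "\<And>n. \<phi> n \<in> Cc" and \<phi>E: "\<And>n. E (\<lambda>x. f x - \<phi> n x) < \<delta> + 1 / real (Suc n)"
    by metis
  have cb: "E (\<lambda>x. \<phi> n x - \<phi> k x) \<le> 2 / real (Suc n) + 2 / real (Suc k)" for n k
  proof -
    let ?w = "Gf m b c (\<lambda>x. f x - \<phi> n x)" and ?h = "Gf m b c (\<lambda>x. f x - \<phi> k x)"
    have wL: "?w \<in> L2" and hL: "?h \<in> L2" using LfC \<phi>C by auto
    define \<psi> where "\<psi> = (\<lambda>x. (1/2) * \<phi> n x + (1/2) * \<phi> k x)"
    have \<psi>C: "\<psi> \<in> Cc" unfolding \<psi>_def by (intro Cc_lin \<phi>C)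
    have eplus: "(\<lambda>i. ?w i + ?h i) = (\<lambda>i. 2 * Gf m b c (\<lambda>x. f x - \<psi> x) i)"
      unfolding \<psi>_def Gf_def by (auto simp: fun_eq_iff algebra_simps)
    have eminus: "(\<lambda>i. ?h i - ?w i) = Gf m b c (\<lambda>x. \<phi> n x - \<phi> k x)"
      unfolding Gf_def by (auto simp: fun_eq_iff algebra_simps)
    have "nrm (\<lambda>i. ?w i + ?h i) = 4 * E (\<lambda>x. f x - \<psi> x)"
      unfolding eplus E_def by (simp add: nrm_cmult[OF LfC[OF \<psi>C]])
    hence "nrm (\<lambda>i. ?w i + ?h i) \<ge> 4 * \<delta>" using low[OF \<psi>C] by simp
    moreover have "nrm (\<lambda>i. ?w i + ?h i) + nrm (\<lambda>i. ?w i - ?h i) = 2 * nrm ?w + 2 * nrm ?h"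
      by (rule parallelogram[OF wL hL])
    moreover have "E (\<lambda>x. \<phi> n x - \<phi> k x) = nrm (\<lambda>i. ?w i - ?h i)"
      unfolding E_def eminus[symmetric] by (rule nrm_swap)
    ultimately show ?thesis using \<phi>E[of n] \<phi>E[of k] unfolding E_def by linarith
  qed
  have LC: "Gf m b c (\<lambda>x. \<phi> n x - \<phi> k x) \<in> L2" for n k
    using Cc_L2[OF g Cc_lin[OF \<phi>C[of n] \<phi>C[of k], where a=1 and a'="-1"]] by simp
  have cauchy: "Cauchy (\<lambda>n. \<phi> n x)" for x
  proof (rule CauchyI)
    fix e :: real assume e: "e > 0"
    have pos: "m x * e\<^sup>2 > 0" using mpos[OF g, of x] e by simp
    obtain N where N: "\<forall>n\<ge>N. 2 / real (Suc n) < m x * e\<^sup>2" using small_seq[OF _ pos, of 2] by auto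
    have "norm (\<phi> n x - \<phi> k x) < e" if "n \<ge> N" "k \<ge> N" for n k
    proof -
      have "(cmod (\<phi> n x - \<phi> k x))\<^sup>2 \<le> E (\<lambda>x. \<phi> n x - \<phi> k x) / (2 * m x)"
        unfolding E_def using pw_bound[OF LC[of n k], of x] by simp
      also have "\<dots> \<le> (2 / real (Suc n) + 2 / real (Suc k)) / (2 * m x)"
        using cb mpos[OF g, of x] by (intro divide_right_mono) auto
      also have "\<dots> < (m x * e\<^sup>2 + m x * e\<^sup>2) / (2 * m x)"
        using N that mpos[OF g, of x] by (intro divide_strict_right_mono add_strict_mono) auto
      also have "\<dots> = e\<^sup>2" using mpos[OF g, of x] by (simp add: field_simps)
      finally have "(cmod (\<phi> n x - \<phi> k x))\<^sup>2 < e\<^sup>2" .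
      thus ?thesis using e by (simp add: power_less_imp_less_base)
    qed
    thus "\<exists>M. \<forall>n\<ge>M. \<forall>k\<ge>M. norm (\<phi> n x - \<phi> k x) < e" by blast
  qed
  define p where "p x = lim (\<lambda>n. \<phi> n x)" for x
  have pw: "(\<lambda>n. \<phi> n x) \<longlonglongrightarrow> p x" for x
    unfolding p_def using cauchy[of x] Cauchy_convergent_iff convergent_LIMSEQ_iff by blast
  have fat: "Gf m b c (\<lambda>x. \<phi> n x - p x) \<in> L2 \<and> E (\<lambda>x. \<phi> n x - p x) \<le> 4 / real (Suc n)" for n
  proof -
    have "(\<lambda>i. (cmod (Gf m b c (\<lambda>x. \<phi> n x - p x) i))\<^sup>2) summable_on UNIV \<and>
          infsum (\<lambda>i. (cmod (Gf m b c (\<lambda>x. \<phi> n x - p x) i))\<^sup>2) UNIV \<le> 4 / real (Suc n)"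
    proof (rule fatou_infsum[where h="\<lambda>k i. (cmod (Gf m b c (\<lambda>x. \<phi> n x - \<phi> k x) i))\<^sup>2" and N=n])
      fix i
      show "(\<lambda>k. (cmod (Gf m b c (\<lambda>x. \<phi> n x - \<phi> k x) i))\<^sup>2) \<longlonglongrightarrow> (cmod (Gf m b c (\<lambda>x. \<phi> n x - p x) i))\<^sup>2"
        by (intro tendsto_intros Gf_tendsto pw)
    next
      fix k assume k: "n \<le> k"
      have "2 / real (Suc k) \<le> 2 / real (Suc n)" using k by (intro divide_left_mono) auto
      thus "(\<lambda>i. (cmod (Gf m b c (\<lambda>x. \<phi> n x - \<phi> k x) i))\<^sup>2) summable_on UNIV \<and>
          infsum (\<lambda>i. (cmod (Gf m b c (\<lambda>x. \<phi> n x - \<phi> k x) i))\<^sup>2) UNIV \<le> 4 / real (Suc n)"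
        using LC[of n k] cb[of n k] unfolding L2_def E_def nrm_def by auto
    qed simp
    thus ?thesis unfolding L2_def E_def nrm_def by simp
  qed
  define gg where "gg x = f x - p x" for x
  have eq1: "Gf m b c gg = (\<lambda>i. Gf m b c (\<lambda>x. f x - \<phi> n x) i + Gf m b c (\<lambda>x. \<phi> n x - p x) i)" for n
    unfolding gg_def Gf_def by (auto simp: fun_eq_iff algebra_simps)
  have ggL: "Gf m b c gg \<in> L2" unfolding eq1[of 0] by (intro L2_add LfC \<phi>C fat[THEN conjunct1])
  have Epn: "E (\<lambda>x. p x - \<phi> n x) = E (\<lambda>x. \<phi> n x - p x)" for n
  proof -
    have "Gf m b c (\<lambda>x. p x - \<phi> n x) = (\<lambda>i. - Gf m b c (\<lambda>x. \<phi> n x - p x) i)"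
      unfolding Gf_def by (auto simp: fun_eq_iff algebra_simps)
    thus ?thesis unfolding E_def by (simp add: nrm_uminus)
  qed
  have LpC: "Gf m b c (\<lambda>x. p x - \<phi> n x) \<in> L2" for n
  proof -
    have "Gf m b c (\<lambda>x. p x - \<phi> n x) = (\<lambda>i. - Gf m b c (\<lambda>x. \<phi> n x - p x) i)"
      unfolding Gf_def by (auto simp: fun_eq_iff algebra_simps)
    thus ?thesis using L2_uminus fat by auto
  qed
  have lowerb: "\<delta> \<le> E (\<lambda>x. gg x - t * \<psi> x)" if \<psi>C: "\<psi> \<in> Cc" for \<psi> t
  proof -
    define X where "X = E (\<lambda>x. gg x - t * \<psi> x)"
    have XL: "Gf m b c (\<lambda>x. gg x - t * \<psi> x) \<in> L2"
      using L2_diff[OF ggL L2_cmult[OF Cc_L2[OF g \<psi>C], of t]] by (simp add: Gf_diff Gf_cmult)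
    have step: "\<delta> \<le> (1 + \<eta>) * X" if \<eta>: "\<eta> > 0" for \<eta>
    proof (rule lim_helper)
      fix n
      have C2: "(\<lambda>x. 1 * \<phi> n x + t * \<psi> x) \<in> Cc" by (intro Cc_lin \<phi>C \<psi>C)
      have eq: "Gf m b c (\<lambda>x. f x - (1 * \<phi> n x + t * \<psi> x)) =
          (\<lambda>i. Gf m b c (\<lambda>x. gg x - t * \<psi> x) i + Gf m b c (\<lambda>x. p x - \<phi> n x) i)"
        unfolding gg_def Gf_def by (auto simp: fun_eq_iff algebra_simps)
      have "\<delta> \<le> E (\<lambda>x. f x - (1 * \<phi> n x + t * \<psi> x))" by (rule low[OF C2])
      also have "\<dots> \<le> (1 + \<eta>) * X + (1 + 1/\<eta>) * E (\<lambda>x. p x - \<phi> n x)"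
        unfolding E_def eq X_def by (rule nrm_add_le[OF XL LpC \<eta>])
      also have "\<dots> \<le> (1 + \<eta>) * X + (1 + 1/\<eta>) * (4 / real (Suc n))"
        unfolding Epn using fat[of n] \<eta> by (intro add_left_mono mult_left_mono) auto
      finally show "\<delta> \<le> (1 + \<eta>) * X + ((1 + 1/\<eta>) * 4) / real (Suc n)" by simp
    qed
    show ?thesis unfolding X_def[symmetric]
    proof (rule lim_helper)
      fix j
      have "\<delta> \<le> (1 + 1 / real (Suc j)) * X" by (rule step) simp
      thus "\<delta> \<le> X + X / real (Suc j)" by (simp add: algebra_simps)
    qed
  qed
  have upperb: "E gg \<le> \<delta>"
  proof -
    have step: "E gg \<le> (1 + \<eta>) * \<delta>" if \<eta>: "\<eta> > 0" for \<eta>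
    proof (rule lim_helper)
      fix n
      have "E gg \<le> (1 + \<eta>) * E (\<lambda>x. f x - \<phi> n x) + (1 + 1/\<eta>) * E (\<lambda>x. \<phi> n x - p x)"
        unfolding E_def eq1[of n] by (rule nrm_add_le[OF LfC[OF \<phi>C] fat[THEN conjunct1] \<eta>])
      also have "\<dots> \<le> (1 + \<eta>) * (\<delta> + 1 / real (Suc n)) + (1 + 1/\<eta>) * (4 / real (Suc n))"
        using \<phi>E[of n] fat[of n] \<eta> by (intro add_mono mult_left_mono) auto
      also have "\<dots> = (1 + \<eta>) * \<delta> + ((1 + \<eta>) + (1 + 1/\<eta>) * 4) / real (Suc n)"
        by (simp add: algebra_simps add_divide_distrib)
      finally show "E gg \<le> (1 + \<eta>) * \<delta> + ((1 + \<eta>) + (1 + 1/\<eta>) * 4) / real (Suc n)" .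
    qed
    show ?thesis
    proof (rule lim_helper)
      fix j
      have "E gg \<le> (1 + 1 / real (Suc j)) * \<delta>" by (rule step) simp
      thus "E gg \<le> \<delta> + \<delta> / real (Suc j)" by (simp add: algebra_simps)
    qed
  qed
  have Egg: "E gg = \<delta>" using upperb lowerb[OF Cc_zero, of 0] by simp
  have \<delta>pos: "\<delta> > 0"
  proof (rule ccontr)
    assume "\<not> \<delta> > 0"
    hence \<delta>0: "\<delta> = 0" using \<delta>nn by simp
    have fl2: "f \<in> l2 m" using f unfolding QN_dom_def by auto
    have conv: "(\<lambda>n. l2norm m (\<phi> n - f)) \<longlonglongrightarrow> 0"
    proof (rule Lim_null_comparison)
      show "\<forall>\<^sub>F n in sequentially. norm (l2norm m (\<phi> n - f)) \<le> sqrt (inverse (real (Suc n)))"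
      proof (intro always_eventually allI)
        fix n
        have L1: "Gf m b c (\<lambda>x. \<phi> n x - f x) \<in> L2"
          using L2_diff[OF Cc_L2[OF g \<phi>C] Lf] by (simp add: Gf_diff)
        have "E (\<lambda>x. \<phi> n x - f x) = E (\<lambda>x. f x - \<phi> n x)"
        proof -
          have "Gf m b c (\<lambda>x. \<phi> n x - f x) = (\<lambda>i. - Gf m b c (\<lambda>x. f x - \<phi> n x) i)"
            unfolding Gf_def by (auto simp: fun_eq_iff algebra_simps)
          thus ?thesis unfolding E_def by (simp add: nrm_uminus)
        qed
        hence "2 * nrm (wt m (\<lambda>x. \<phi> n x - f x)) \<le> inverse (real (Suc n))"
          using E_l2_le[OF g L1] \<phi>E[of n] \<delta>0 unfolding E_def by (simp add: inverse_eq_divide)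
        hence "nrm (wt m (\<lambda>x. \<phi> n x - f x)) \<le> inverse (real (Suc n))"
          using nrm_nonneg[of "wt m (\<lambda>x. \<phi> n x - f x)"] by linarith
        hence "sqrt (nrm (wt m (\<lambda>x. \<phi> n x - f x))) \<le> sqrt (inverse (real (Suc n)))"
          by (rule real_sqrt_le_mono)
        thus "norm (l2norm m (\<phi> n - f)) \<le> sqrt (inverse (real (Suc n)))"
          unfolding l2norm_wt[OF g] fun_diff_def by (simp add: real_sqrt_ge_zero nrm_nonneg)
      qed
      show "(\<lambda>n. sqrt (inverse (real (Suc n)))) \<longlonglongrightarrow> 0"
        using tendsto_real_sqrt[OF LIMSEQ_inverse_real_of_nat] by simp
    qed
    have cau: "\<exists>N. \<forall>k\<ge>N. \<forall>l\<ge>N. Re (QN_val b c (\<phi> k - \<phi> l) (\<phi> k - \<phi> l)) < \<epsilon>" if e: "\<epsilon> > 0" for \<epsilon>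
    proof -
      obtain N where N: "\<forall>n\<ge>N. 2 / real (Suc n) < \<epsilon> / 2" using small_seq[of 2 "\<epsilon>/2"] e by auto
      have "Re (QN_val b c (\<phi> k - \<phi> l) (\<phi> k - \<phi> l)) < \<epsilon>" if "k \<ge> N" "l \<ge> N" for k l
      proof -
        have "Re (QN_val b c (\<phi> k - \<phi> l) (\<phi> k - \<phi> l)) \<le> nrm (Gf m b c (\<phi> k - \<phi> l))"
          by (rule ReQN_le_E[OF g Cc_diff[OF \<phi>C \<phi>C]])
        also have "\<dots> = E (\<lambda>x. \<phi> k x - \<phi> l x)" unfolding E_def fun_diff_def ..
        also have "\<dots> \<le> 2 / real (Suc k) + 2 / real (Suc l)" by (rule cb)
        also have "\<dots> < \<epsilon>/2 + \<epsilon>/2" using N that by (intro add_strict_mono) auto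
        finally show ?thesis by simp
      qed
      thus ?thesis by blast
    qed
    have "approx_seq m b c \<phi> f" unfolding approx_seq_def using fl2 \<phi>C conv cau by blast
    hence "f \<in> QD_dom m b c" unfolding QD_dom_def using fl2 by blast
    with nf show False by simp
  qed
  have orth: "ip (Gf m b c gg) (Gf m b c (dlt x)) = 0" for x
  proof (rule ccontr)
    define B where "B = ip (Gf m b c gg) (Gf m b c (dlt x))"
    define H where "H = Gf m b c (dlt x)"
    assume "ip (Gf m b c gg) (Gf m b c (dlt x)) \<noteq> 0"
    hence Bnz: "B \<noteq> 0" unfolding B_def .
    have HL: "H \<in> L2" unfolding H_def by (rule Cc_L2[OF g dlt_Cc])
    define N where "N = nrm H"
    have Nnn: "N \<ge> 0" unfolding N_def by (rule nrm_nonneg)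
    have key: "2 * Re (cnj t * B) \<le> (cmod t)\<^sup>2 * N" for t
    proof -
      have eqG: "Gf m b c (\<lambda>y. gg y - t * dlt x y) = (\<lambda>i. Gf m b c gg i + (- t) * H i)"
        unfolding H_def Gf_def by (auto simp: fun_eq_iff algebra_simps)
      have "\<delta> \<le> E (\<lambda>y. gg y - t * dlt x y)" by (rule lowerb[OF dlt_Cc])
      also have "\<dots> = E gg + nrm (\<lambda>i. (- t) * H i) + 2 * Re (ip (Gf m b c gg) (\<lambda>i. (- t) * H i))"
        unfolding E_def eqG by (rule nrm_add[OF ggL L2_cmult[OF HL]])
      also have "nrm (\<lambda>i. (- t) * H i) = (cmod t)\<^sup>2 * N" unfolding N_def using nrm_cmult[OF HL, of "-t"] by simp
      also have "ip (Gf m b c gg) (\<lambda>i. (- t) * H i) = - (cnj t * B)"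
        unfolding B_def H_def[symmetric] using ip_cmult_right[OF ggL HL, of "-t"] by simp
      finally show ?thesis using Egg by simp
    qed
    define s where "s = 1 / (N + 1)"
    have s: "s > 0" using Nnn unfolding s_def by simp
    have Bp: "(cmod B)\<^sup>2 > 0" using Bnz by simp
    have "2 * Re (cnj (complex_of_real s * B) * B) \<le> (cmod (complex_of_real s * B))\<^sup>2 * N" by (rule key)
    moreover have "Re (cnj (complex_of_real s * B) * B) = s * (cmod B)\<^sup>2"
    proof -
      have "cnj (complex_of_real s * B) * B = complex_of_real s * (B * cnj B)" by (simp add: mult_ac)
      also have "\<dots> = complex_of_real (s * (cmod B)\<^sup>2)"
        by (simp only: complex_norm_square[symmetric] of_real_mult)
      finally show ?thesis using arg_cong[of _ _ Re] by (simp only: Re_complex_of_real)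
    qed
    moreover have "(cmod (complex_of_real s * B))\<^sup>2 = s\<^sup>2 * (cmod B)\<^sup>2"
      by (simp add: norm_mult power_mult_distrib)
    ultimately have "2 * s * (cmod B)\<^sup>2 \<le> s * (s * N) * (cmod B)\<^sup>2" by (simp add: power2_eq_square algebra_simps)
    hence "2 \<le> s * N" using s Bp by (simp add: mult_le_cancel_right algebra_simps)
    moreover have "s * N < 1" using Nnn unfolding s_def by (simp add: field_simps)
    ultimately show False by simp
  qed
  show ?thesis using ggL \<delta>pos Egg orth unfolding E_def by auto
qed

end


context
  fixes m :: "'v \<Rightarrow> real" and b :: "'v \<Rightarrow> 'v \<Rightarrow> real" and c :: "'v \<Rightarrow> real"
  assumes g: "graph_over m b c"
begin

lemma inner_cont2:
  assumes aL: "\<And>n. a n \<in> l2 m" and a0: "a0 \<in> l2 m" and hL: "\<And>n. h n \<in> l2 m" and h0: "h0 \<in> l2 m"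
    and ca: "(\<lambda>n. l2norm m (a n - a0)) \<longlonglongrightarrow> 0" and ch: "(\<lambda>n. l2norm m (h n - h0)) \<longlonglongrightarrow> 0"
  shows "(\<lambda>n. inner_l2 m (a n) (h n)) \<longlonglongrightarrow> inner_l2 m a0 h0"
proof -
  have e: "l2norm m (u - v) = sqrt (nrm (\<lambda>i. wt m u i - wt m v i))" for u v
    unfolding l2norm_wt[OF g] fun_diff_def wt_diff ..
  show ?thesis unfolding inner_wt[OF g]
    by (rule ip_cont) (use aL a0 hL h0 ca ch l2_wt[OF g] e in auto)
qed

lemma inner_uminus_right: "inner_l2 m u (\<lambda>x. - v x) = - inner_l2 m u v"
  unfolding inner_l2_def by (simp add: infsum_uminus)

lemma l2_uminus: "v \<in> l2 m \<Longrightarrow> (\<lambda>x. - v x) \<in> l2 m"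
  unfolding l2_def by simp

lemma part2:
  assumes conn: "connected_graph b" and f: "f \<in> QN_dom m b c" "u_infty b f \<noteq> (\<lambda>_. 0)"
    and FC: "FC m b c" and ess: "essentially_selfadjoint m (Cc_graph m b c)"
  shows False
proof -
  have nf: "f \<notin> QD_dom m b c" by (rule part1(1)[OF g conn f])
  obtain gg where ggL: "Gf m b c gg \<in> L2" and Epos: "nrm (Gf m b c gg) > 0"
    and orth: "\<And>x. ip (Gf m b c gg) (Gf m b c (dlt x)) = 0"
    using exists_g[OF g f(1) nf] by blast
  have ggl2: "gg \<in> l2 m" using L2_QN[OF g ggL] unfolding QN_dom_def by auto
  have ngl2: "(\<lambda>x. - gg x) \<in> l2 m" by (rule l2_uminus[OF ggl2])
  have Lgg: "Ltilde m b c gg x = - gg x" for x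
  proof -
    have "2 * complex_of_real (m x) * (Ltilde m b c gg x + gg x) = 0"
      using B_dlt[OF g ggL, of x] orth[of x] by simp
    hence "Ltilde m b c gg x + gg x = 0" using mpos[OF g, of x] by (simp only: mult_eq_0_iff) simp
    thus ?thesis by (simp add: eq_neg_iff_add_eq_0)
  qed
  have green: "inner_l2 m (Ltilde m b c \<phi>) gg = inner_l2 m \<phi> (\<lambda>x. - gg x)" if \<phi>C: "\<phi> \<in> Cc" for \<phi>
  proof -
    have "ip (Gf m b c \<phi>) (Gf m b c gg) = 0" unfolding ip_Gf_Cc[OF g \<phi>C ggL] orth by simp
    thus ?thesis unfolding Key[OF g FC \<phi>C ggL] inner_uminus_right by simp
  qed
  have Cl2: "\<phi> \<in> l2 m" if "\<phi> \<in> Cc" for \<phi> using Cc_QN[OF g that] unfolding QN_dom_def by auto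
  have CLl2: "Ltilde m b c \<phi> \<in> l2 m" if "\<phi> \<in> Cc" for \<phi> using FC that unfolding FC_def by blast
  have cgraph: "fst (s n) \<in> Cc \<and> snd (s n) = Ltilde m b c (fst (s n))" if "\<forall>n. s n \<in> Cc_graph m b c" for s n
  proof -
    from that obtain \<phi> where "s n = (\<phi>, Ltilde m b c \<phi>)" "\<phi> \<in> Cc" unfolding Cc_graph_def by blast
    thus ?thesis by simp
  qed
  have adj: "(gg, (\<lambda>x. - gg x)) \<in> graph_adjoint m (graph_closure m (Cc_graph m b c))"
    unfolding graph_adjoint_def
  proof (safe intro!: ggl2 ngl2)
    fix u z assume "(u, z) \<in> graph_closure m (Cc_graph m b c)"
    then obtain s where ul: "u \<in> l2 m" and zl: "z \<in> l2 m" and sG: "\<forall>n. s n \<in> Cc_graph m b c"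
      and cu: "(\<lambda>n. l2norm m (fst (s n) - u)) \<longlonglongrightarrow> 0" and cz: "(\<lambda>n. l2norm m (snd (s n) - z)) \<longlonglongrightarrow> 0"
      unfolding graph_closure_def by auto
    have sC: "fst (s n) \<in> Cc" and sL: "snd (s n) = Ltilde m b c (fst (s n))" for n using cgraph[OF sG] by auto
    have z0: "(\<lambda>n. l2norm m (gg - gg)) \<longlonglongrightarrow> 0" by (simp add: l2norm_def)
    have n0: "(\<lambda>n. l2norm m ((\<lambda>x. - gg x) - (\<lambda>x. - gg x))) \<longlonglongrightarrow> 0" by (simp add: l2norm_def)
    have l1: "(\<lambda>n. inner_l2 m (snd (s n)) gg) \<longlonglongrightarrow> inner_l2 m z gg"
      by (rule inner_cont2[OF _ zl _ ggl2 cz z0]) (use sL CLl2 sC ggl2 in auto)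
    have l2: "(\<lambda>n. inner_l2 m (fst (s n)) (\<lambda>x. - gg x)) \<longlonglongrightarrow> inner_l2 m u (\<lambda>x. - gg x)"
      by (rule inner_cont2[OF _ ul _ ngl2 cu n0]) (use Cl2 sC ngl2 in auto)
    have "(\<lambda>n. inner_l2 m (snd (s n)) gg) = (\<lambda>n. inner_l2 m (fst (s n)) (\<lambda>x. - gg x))"
      using sL green sC by auto
    with l1 l2 show "inner_l2 m z gg = inner_l2 m u (\<lambda>x. - gg x)" using LIMSEQ_unique by metis
  qed
  hence "(gg, (\<lambda>x. - gg x)) \<in> graph_closure m (Cc_graph m b c)"
    using ess unfolding essentially_selfadjoint_def by simp
  then obtain s where sG: "\<forall>n. s n \<in> Cc_graph m b c"
      and cu: "(\<lambda>n. l2norm m (fst (s n) - gg)) \<longlonglongrightarrow> 0"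
      and cz: "(\<lambda>n. l2norm m (snd (s n) - (\<lambda>x. - gg x))) \<longlonglongrightarrow> 0"
      unfolding graph_closure_def by auto
  have sC: "fst (s n) \<in> Cc" and sL: "snd (s n) = Ltilde m b c (fst (s n))" for n using cgraph[OF sG] by auto
  have lim: "(\<lambda>n. inner_l2 m (snd (s n)) (fst (s n))) \<longlonglongrightarrow> inner_l2 m (\<lambda>x. - gg x) gg"
    by (rule inner_cont2[OF _ ngl2 _ ggl2 cz cu]) (use sL CLl2 sC Cl2 in auto)
  have "Re (inner_l2 m (\<lambda>x. - gg x) gg) \<ge> 0"
  proof (rule LIMSEQ_le_const[OF tendsto_Re[OF lim]])
    show "\<exists>N. \<forall>n\<ge>N. 0 \<le> Re (inner_l2 m (snd (s n)) (fst (s n)))"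
      using positivity[OF g FC sC] sL by auto
  qed
  moreover have "inner_l2 m (\<lambda>x. - gg x) gg = - complex_of_real (nrm (wt m gg))"
  proof -
    have wtn: "wt m (\<lambda>x. - gg x) = (\<lambda>i. (-1) * wt m gg i)" unfolding wt_def by (simp add: fun_eq_iff)
    have wL: "wt m gg \<in> L2" using ggl2 l2_wt[OF g] by simp
    have ipm: "ip (\<lambda>i. (-1) * wt m gg i) (wt m gg) = (-1) * ip (wt m gg) (wt m gg)"
      by (rule ip_cmult_left[OF wL wL])
    show ?thesis unfolding inner_wt[OF g] wtn ipm ip_self by simp
  qed
  ultimately have "nrm (wt m gg) \<le> 0" by simp
  hence n0: "nrm (wt m gg) = 0" using nrm_nonneg[of "wt m gg"] by simp
  have "gg x = 0" for x
  proof -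
    have "wt m gg x = 0" by (rule nrm_zeroD[OF _ n0]) (use ggl2 l2_wt[OF g] in simp)
    thus ?thesis using mpos[OF g, of x] by (simp add: wt_def)
  qed
  hence "Gf m b c gg = (\<lambda>i. 0)" unfolding Gf_def by (auto simp: fun_eq_iff)
  with Epos show False by simp
qed

end

theorem mainTheorem12:
  fixes m :: "'v::countable \<Rightarrow> real" and b :: "'v \<Rightarrow> 'v \<Rightarrow> real" and c :: "'v \<Rightarrow> real"
  assumes "graph_over m b c"
    and "connected_graph b"
    and "\<exists>f \<in> QN_dom m b c. u_infty b f \<noteq> (\<lambda>_. 0)"
  shows "QN_form m b c \<noteq> QD_form m b c
         \<and> (FC m b c \<longrightarrow> \<not> essentially_selfadjoint m (Cc_graph m b c))"
proof -
  obtain f where f: "f \<in> QN_dom m b c" "u_infty b f \<noteq> (\<lambda>_. 0)" using assms(3) by blast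
  show ?thesis
  proof
    show "QN_form m b c \<noteq> QD_form m b c" by (rule part1(2)[OF assms(1,2) f])
    show "FC m b c \<longrightarrow> \<not> essentially_selfadjoint m (Cc_graph m b c)"
      using part2[OF assms(1,2) f] by blast
  qed
qed


end
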